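(* Let $(k_n)_{n\geq1}$ be scalars and let $\kappa$ be the infinitesimal character of the gap-insertion Hopf algebra $\mathbf{H}$ of noncrossing partitions with $\kappa(J_n)=k_n$ for $n\geq1$, where $J_n=\{\{1\},\dots,\{n\}\}$, and $\kappa(P)=0$ for every other noncrossing partition. Let $K$ be the character of $\mathbf{B}$ with $K(P)=\kappa(P)$ for all nonempty noncrossing partitions $P$, and $\mathcal{E}_\prec(\kappa)$ the unique $\phi\in\mathbf H^*$ with $\phi=\varepsilon+\kappa\prec\phi$. Then for every noncrossing partition $P$ of $[n]$ with $k$ blocks, $$\mathcal{E}_\prec(\kappa)(P)=(\psi_\prec\curvearrowleft K)(P)=\sum_{Q\geq P}K(P/Q)=\begin{cases}0&\text{if }k<n,\\ \displaystyle\sum_{Q\in\operatorname{NCP}(n)}\prod_{\pi\in Q}k_{\sharp\pi}&\text{if }k=n,\end{cases}$$ where $\psi_\prec$ is the unique element of $\mathbf H^*$ with $\psi_\prec=\varepsilon+e\prec\psi_\prec$ and the middle sum runs over noncrossing partitions $Q$ of $[n]$ coarser than $P$.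
   Context: $\operatorname{NCP}(n)$: noncrossing partitions of $[n]$ (no $a<c<b<d$ with $a,b$ in one block and $c,d$ in another); partitions of finite linearly ordered sets are identified with partitions of $[n]$ via the order-preserving bijection; $P_{|X}$ induced partition; $\sharp\pi$ block size. $\operatorname{Conv}(X)=\{\min X,\dots,\max X\}$; on blocks $\pi\to\rho$ iff $\operatorname{Conv}(\pi)\cap\rho\neq\emptyset$ (transitively closed). Upperset $U$: ($\pi\in U,\pi\to\rho$)$\Rightarrow\rho\in U$; lowerset $L$: ($\pi\in L,\sigma\to\pi$)$\Rightarrow\sigma\in L$. Cut $(L,U)$: lowerset $L$ and complement $U$; $L$ identified with the restriction of $P$ to the union of its blocks, elements $x_1<\dots<x_k$; $D_0=\{y<x_1\}$, $D_i=\{x_i<y<x_{i+1}\}$, $D_k=\{y>x_k\}$, $U_i=P_{|D_i}$, $\overline U$ ordered product of nonempty $U_i$. $\mathbf H$: free associative unital algebra on nonempty noncrossing partitions; basis of multipartitions (viewed as partitions of $[n_1+\dots+n_r]$ by shifting); cuts of multipartitions are tuples of cuts, $L=L_1\cdots L_r$, $\overline U=\overline{U_1}\cdots\overline{U_r}$. Counit $\varepsilon$. $\Delta_\prec(P)=\sum_{\text{cuts},1\in L}L\otimes\overline U$; $(f\prec g)(\mathbf1)=0$, $(f\prec g)(x)=(f\otimes g)\Delta_\prec(x)$ on nonempty multipartitions. Infinitesimal characters: linear forms vanishing on $\mathbf1$ and on products of two nonempty monomials. $e$: infinitesimal character with $e(P)=1$ for one-block noncrossing $P$ and $0$ on other noncrossing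 partitions. $\mathbf B$: free commutative unital algebra on nonempty noncrossing partitions; characters are unital algebra maps to $\mathbb K$. For noncrossing $P\leq Q$ (refinement), $Q=\{\tau_1,\dots,\tau_l\}$, $P/Q=P_{|\tau_1}\cdots P_{|\tau_l}$. Coaction $\rho(P)=\sum_{Q\geq P\text{ noncrossing}}Q\otimes P/Q$ (algebra morphism $\mathbf H\to\mathbf H\otimes\mathbf B$); $\alpha\curvearrowleft\phi=(\alpha\otimes\phi)\circ\rho$. *)

theory Defs
  imports Main "HOL-Library.Multiset" "HOL-Library.Disjoint_Sets"
begin

type_synonym part = "nat set set"
type_synonym mpart = "part list"       (* a multipartition = monomial of H; [] is the unit 1 *)

definition noncrossing :: "part \<Rightarrow> bool" where
  "noncrossing P \<longleftrightarrow> \<not> (\<exists>B1\<in>P. \<exists>B2\<in>P. B1 \<noteq> B2 \<and>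
     (\<exists>a b c d. a < c \<and> c < b \<and> b < d \<and> a \<in> B1 \<and> b \<in> B1 \<and> c \<in> B2 \<and> d \<in> B2))"

definition ncp :: "nat \<Rightarrow> part \<Rightarrow> bool" where
  "ncp n P \<longleftrightarrow> partition_on {1..n} P \<and> noncrossing P"

(* basis elements of H: words in nonempty noncrossing partitions *)
definition valid_mp :: "mpart \<Rightarrow> bool" where
  "valid_mp xs \<longleftrightarrow> (\<forall>P\<in>set xs. \<exists>n\<ge>1. ncp n P)"

(* identification of a partition of a finite set of naturals with one of [m]
   via the order-preserving bijection *)
definition stdz :: "part \<Rightarrow> part" where
  "stdz P = (\<lambda>B. (\<lambda>x. card {y\<in>\<Union>P. y < x} + 1) ` B) ` P"

(* induced partition P_{|X} (as a partition of X, before standardization) *)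
definition restr :: "part \<Rightarrow> nat set \<Rightarrow> part" where
  "restr P X = {B \<inter> X | B. B \<in> P \<and> B \<inter> X \<noteq> {}}"

definition conv :: "nat set \<Rightarrow> nat set" where
  "conv X = {Min X..Max X}"

definition arrow :: "part \<Rightarrow> (nat set \<times> nat set) set" where
  "arrow P = {(\<pi>, \<rho>). \<pi> \<in> P \<and> \<rho> \<in> P \<and> conv \<pi> \<inter> \<rho> \<noteq> {}}\<^sup>+"

definition lowerset :: "part \<Rightarrow> part \<Rightarrow> bool" where
  "lowerset P L \<longleftrightarrow> L \<subseteq> P \<and> (\<forall>\<pi>\<in>L. \<forall>\<sigma>. (\<sigma>, \<pi>) \<in> arrow P \<longrightarrow> \<sigma> \<in> L)"

(* the gaps D_0, ..., D_k determined by the elements x_1 < ... < x_k of L in [n] *)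
definition gaps :: "nat \<Rightarrow> nat set \<Rightarrow> nat set list" where
  "gaps n X = (let bs = 0 # sorted_list_of_set X @ [n + 1]
               in map (\<lambda>i. {bs ! i <..< bs ! (i + 1)}) [0..<length bs - 1])"

(* U-bar: ordered product of the nonempty U_i = P_{|D_i} *)
definition ubar :: "part \<Rightarrow> part \<Rightarrow> mpart" where
  "ubar P L = map (\<lambda>D. stdz (restr P D))
                (filter (\<lambda>D. D \<noteq> {}) (gaps (card (\<Union>P)) (\<Union>L)))"

(* L = L_1 ... L_r (empty L_i are the unit) *)
definition lword :: "part list \<Rightarrow> mpart" where
  "lword ls = map stdz (filter (\<lambda>L. L \<noteq> {}) ls)"

definition uword :: "mpart \<Rightarrow> part list \<Rightarrow> mpart" where
  "uword xs ls = concat (map (\<lambda>(P, L). ubar P L) (zip xs ls))"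

definition cuts1 :: "mpart \<Rightarrow> part list set" where
  "cuts1 xs = {ls. length ls = length xs \<and> (\<forall>i<length xs. lowerset (xs ! i) (ls ! i))
                  \<and> 1 \<in> \<Union>(hd ls)}"

(* half-shuffle f \<prec> g on H^*, linear forms given by their values on the basis *)
definition prec :: "(mpart \<Rightarrow> 'a::comm_ring_1) \<Rightarrow> (mpart \<Rightarrow> 'a) \<Rightarrow> mpart \<Rightarrow> 'a" where
  "prec f g xs = (if xs = [] then 0
                  else (\<Sum>ls\<in>cuts1 xs. f (lword ls) * g (uword xs ls)))"

definition eps :: "mpart \<Rightarrow> 'a::comm_ring_1" where
  "eps xs = (if xs = [] then 1 else 0)"

definition Jpart :: "nat \<Rightarrow> part" where
  "Jpart n = (\<lambda>i. {i}) ` {1..n}"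

definition kappa :: "(nat \<Rightarrow> 'a::comm_ring_1) \<Rightarrow> mpart \<Rightarrow> 'a" where
  "kappa k xs = (case xs of [Q] \<Rightarrow> (if Q = Jpart (card (\<Union>Q)) then k (card (\<Union>Q)) else 0)
                 | _ \<Rightarrow> 0)"

definition e_inf :: "mpart \<Rightarrow> 'a::comm_ring_1" where
  "e_inf xs = (case xs of [Q] \<Rightarrow> (if card Q = 1 then 1 else 0) | _ \<Rightarrow> 0)"

(* monomials of B = multisets of partitions; the character of B extending a form on partitions *)
definition Kchar :: "(mpart \<Rightarrow> 'a::comm_ring_1) \<Rightarrow> part multiset \<Rightarrow> 'a" where
  "Kchar f M = prod_mset (image_mset (\<lambda>Q. f [Q]) M)"

definition refines :: "part \<Rightarrow> part \<Rightarrow> bool" where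
  "refines P Q \<longleftrightarrow> (\<forall>B\<in>P. \<exists>C\<in>Q. B \<subseteq> C)"

definition quot :: "part \<Rightarrow> part \<Rightarrow> part multiset" where
  "quot P Q = image_mset (\<lambda>\<tau>. stdz (restr P \<tau>)) (mset_set Q)"

(* (alpha \<curvearrowleft> phi)(P) = (alpha \<otimes> phi)(rho(P)) for a partition P of [n] *)
definition act :: "(mpart \<Rightarrow> 'a::comm_ring_1) \<Rightarrow> (part multiset \<Rightarrow> 'a) \<Rightarrow> nat \<Rightarrow> part \<Rightarrow> 'a" where
  "act \<alpha> \<phi> n P = (\<Sum>Q\<in>{Q. ncp n Q \<and> refines P Q}. \<alpha> [Q] * \<phi> (quot P Q))"

end

theory Submission
  imports Defs "HOL-Library.FuncSet"
begin


definition rk :: "nat set \<Rightarrow> nat \<Rightarrow> nat" where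
  "rk S x = card {y\<in>S. y < x} + 1"

lemma stdz_rk: "stdz P = (`) (rk (\<Union>P)) ` P"
  unfolding stdz_def rk_def by simp

lemma rk_strict:
  assumes "finite S" "x \<in> S" "x < y"
  shows "rk S x < rk S y"
proof -
  have "{z\<in>S. z < x} \<subset> {z\<in>S. z < y}" using assms by auto
  then show ?thesis unfolding rk_def using assms(1) by (simp add: psubset_card_mono)
qed

lemma rk_strict_mono: "finite S \<Longrightarrow> strict_mono_on S (rk S)"
  by (auto simp: strict_mono_on_def intro: rk_strict)

lemma rk_inj: "finite S \<Longrightarrow> inj_on (rk S) S"
  using rk_strict_mono strict_mono_on_imp_inj_on by blast

lemma rk_image: assumes "finite S" shows "rk S ` S = {1..card S}"
proof -
  have sub: "rk S ` S \<subseteq> {1..card S}"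
  proof
    fix z assume "z \<in> rk S ` S"
    then obtain x where x: "x \<in> S" "z = rk S x" by auto
    have "{y\<in>S. y < x} \<subset> S" using x by auto
    then have "card {y\<in>S. y < x} < card S" using assms by (simp add: psubset_card_mono)
    then show "z \<in> {1..card S}" using x unfolding rk_def by auto
  qed
  have "card (rk S ` S) = card S" using rk_inj[OF assms] by (simp add: card_image)
  then show ?thesis using sub by (simp add: card_subset_eq)
qed

lemma rk_interval: "x \<in> {1..n} \<Longrightarrow> rk {1..n} x = x"
proof -
  assume "x \<in> {1..n}"
  then have "{y\<in>{1..n}. y < x} = {1..<x}" by auto
  then show ?thesis using \<open>x \<in> {1..n}\<close> unfolding rk_def by simp
qed

definition NC :: "nat set \<Rightarrow> part set" where
  "NC D = {Q. partition_on D Q \<and> noncrossing Q}"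

lemma ncp_NC: "ncp n Q \<longleftrightarrow> Q \<in> NC {1..n}"
  by (simp add: ncp_def NC_def)

lemma finite_NC: "finite D \<Longrightarrow> finite (NC D)"
  unfolding NC_def using finitely_many_partition_on[of D] by (auto elim: rev_finite_subset)

lemma noncrossingD:
  assumes "noncrossing P" "B1 \<in> P" "B2 \<in> P" "a < c" "c < b" "b < d"
    "a \<in> B1" "b \<in> B1" "c \<in> B2" "d \<in> B2"
  shows "B1 = B2"
proof (rule ccontr)
  assume ne: "B1 \<noteq> B2"
  have "B1 \<noteq> B2 \<and> (\<exists>a b c d. a < c \<and> c < b \<and> b < d \<and> a \<in> B1 \<and> b \<in> B1 \<and> c \<in> B2 \<and> d \<in> B2)"
      using ne assms(4-10) by blast
  then have "\<exists>B2'\<in>P. B1 \<noteq> B2' \<and> (\<exists>a b c d. a < c \<and> c < b \<and> b < d \<and> a \<in> B1 \<and> b \<in> B1 \<and> c \<in> B2' \<and> d \<in> B2')"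
    using assms(3) by (rule bexI)
  then have "\<exists>B1'\<in>P. \<exists>B2'\<in>P. B1' \<noteq> B2' \<and> (\<exists>a b c d. a < c \<and> c < b \<and> b < d \<and> a \<in> B1' \<and> b \<in> B1' \<and> c \<in> B2' \<and> d \<in> B2')"
    using assms(2) by (rule bexI)
  with assms(1) show False unfolding noncrossing_def by (rule notE)
qed

lemma noncrossingI:
  assumes "\<And>B1 B2 a b c d. B1 \<in> P \<Longrightarrow> B2 \<in> P \<Longrightarrow> a < c \<Longrightarrow> c < b \<Longrightarrow> b < d \<Longrightarrow>
    a \<in> B1 \<Longrightarrow> b \<in> B1 \<Longrightarrow> c \<in> B2 \<Longrightarrow> d \<in> B2 \<Longrightarrow> B1 = B2"
  shows "noncrossing P"
  unfolding noncrossing_def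
proof (clarify)
  fix B1 B2 a b c d
  assume h: "B1 \<in> P" "B2 \<in> P" "B1 \<noteq> B2" "a < c" "c < b" "b < d"
    "a \<in> B1" "b \<in> B1" "c \<in> B2" "d \<in> B2"
  have "B1 = B2" by (rule assms[OF h(1,2,4-10)])
  then show False using h(3) by simp
qed

lemma strict_mono_on_less_iff:
  fixes h :: "nat \<Rightarrow> nat"
  assumes "strict_mono_on A h" "x \<in> A" "y \<in> A"
  shows "h x < h y \<longleftrightarrow> x < y"
proof
  show "x < y \<Longrightarrow> h x < h y" using strict_mono_onD[OF assms] .
  assume a: "h x < h y"
  show "x < y"
  proof (rule ccontr)
    assume "\<not> x < y"
    then consider "y < x" | "y = x" by linarith
    then show False
    proof cases
      case 1 then have "h y < h x" using strict_mono_onD[OF assms(1,3,2)] by blast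
      then show False using a by simp
    next
      case 2 then show False using a by simp
    qed
  qed
qed

lemma nc_image:
  fixes h :: "nat \<Rightarrow> nat"
  assumes sm: "strict_mono_on A h" and Q: "partition_on A Q" and nc: "noncrossing Q"
  shows "partition_on (h ` A) ((`) h ` Q) \<and> noncrossing ((`) h ` Q)"
proof
  have inj: "inj_on h A" using sm strict_mono_on_imp_inj_on by blast
  have "{} \<notin> (`) h ` Q" using partition_onD3[OF Q] by auto
  then have "(`) h ` Q - {{}} = (`) h ` Q" by auto
  then show "partition_on (h ` A) ((`) h ` Q)" using partition_on_inj_image[OF Q inj] by simp
  show "noncrossing ((`) h ` Q)"
  proof (rule noncrossingI)
    fix C1 C2 a b c d
    assume C: "C1 \<in> (`) h ` Q" "C2 \<in> (`) h ` Q" and o: "a < c" "c < b" "b < d"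
      and m: "a \<in> C1" "b \<in> C1" "c \<in> C2" "d \<in> C2"
    obtain B1 where B1: "B1 \<in> Q" "C1 = h ` B1" using C(1) by auto
    obtain B2 where B2: "B2 \<in> Q" "C2 = h ` B2" using C(2) by auto
    obtain a' where "a' \<in> B1" "a = h a'" using m(1) B1 by auto
    moreover obtain b' where "b' \<in> B1" "b = h b'" using m(2) B1 by auto
    moreover obtain c' where "c' \<in> B2" "c = h c'" using m(3) B2 by auto
    moreover obtain d' where "d' \<in> B2" "d = h d'" using m(4) B2 by auto
    ultimately have p: "a' \<in> B1" "b' \<in> B1" "c' \<in> B2" "d' \<in> B2"
      "a = h a'" "b = h b'" "c = h c'" "d = h d'" by auto
    have sub: "B1 \<subseteq> A" "B2 \<subseteq> A" using B1 B2 Q partition_onD1 by blast+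
    have inA: "a' \<in> A" "b' \<in> A" "c' \<in> A" "d' \<in> A" using p sub by auto
    have "a' < c'" "c' < b'" "b' < d'"
      using o p(5-8) strict_mono_on_less_iff[OF sm] inA by auto
    then have "B1 = B2" using noncrossingD[OF nc B1(1) B2(1) _ _ _ p(1-4)] by blast
    then show "C1 = C2" using B1 B2 by simp
  qed
qed

lemma card_image_block:
  assumes "inj_on h A" "partition_on A Q" "B \<in> Q"
  shows "card (h ` B) = card B"
proof -
  have "B \<subseteq> A" using assms(2,3) partition_onD1 by blast
  then show ?thesis by (rule card_image[OF inj_on_subset[OF assms(1)]])
qed

lemma stdz_ncp:
  assumes "finite S" "partition_on S Q" "noncrossing Q"
  shows "ncp (card S) (stdz Q)"
proof -
  have U: "\<Union>Q = S" using assms partition_onD1 by blast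
  show ?thesis
    using nc_image[OF rk_strict_mono[OF assms(1)] assms(2,3)] rk_image[OF assms(1)]
    unfolding ncp_def stdz_rk U by simp
qed

lemma stdz_Union:
  assumes "finite (\<Union>Q)" shows "\<Union>(stdz Q) = {1..card (\<Union>Q)}"
  using rk_image[OF assms] unfolding stdz_rk image_Union[symmetric] by simp

lemma stdz_id: assumes "ncp n P" shows "stdz P = P"
proof -
  have U: "\<Union>P = {1..n}" using assms unfolding ncp_def partition_on_def by simp
  have "(`) (rk {1..n}) B = B" if "B \<in> P" for B
  proof -
    have "B \<subseteq> {1..n}" using U that by auto
    then have "rk {1..n} ` B = (\<lambda>x. x) ` B" using rk_interval by (intro image_cong) auto
    then show ?thesis by simp
  qed
  then show ?thesis unfolding stdz_rk U by simp
qed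

lemma ncp_Union: "ncp n P \<Longrightarrow> \<Union>P = {1..n}"
  unfolding ncp_def partition_on_def by simp

lemma ncp_card_Union: "ncp n P \<Longrightarrow> card (\<Union>P) = n"
  using ncp_Union by simp

definition CC :: "(nat \<Rightarrow> 'a::comm_ring_1) \<Rightarrow> nat set \<Rightarrow> 'a" where
  "CC k D = (\<Sum>Q\<in>NC D. \<Prod>\<pi>\<in>Q. k (card \<pi>))"

lemma strict_mono_on_inv:
  fixes h :: "nat \<Rightarrow> nat"
  assumes "strict_mono_on A h"
  shows "strict_mono_on (h ` A) (the_inv_into A h)"
proof (rule strict_mono_onI)
  have inj: "inj_on h A" using assms strict_mono_on_imp_inj_on by blast
  fix r s assume "r \<in> h ` A" "s \<in> h ` A" "r < s"
  then obtain x y where "x \<in> A" "y \<in> A" "r = h x" "s = h y" by auto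
  then show "the_inv_into A h r < the_inv_into A h s"
    using \<open>r < s\<close> strict_mono_on_less_iff[OF assms] the_inv_into_f_f[OF inj] by auto
qed

lemma CC_transport:
  fixes h :: "nat \<Rightarrow> nat"
  assumes sm: "strict_mono_on A h"
  shows "CC k (h ` A) = CC k A"
proof -
  have inj: "inj_on h A" using sm strict_mono_on_imp_inj_on by blast
  let ?g = "the_inv_into A h"
  have smg: "strict_mono_on (h ` A) ?g" by (rule strict_mono_on_inv[OF sm])
  have gh: "?g (h x) = x" if "x \<in> A" for x using the_inv_into_f_f[OF inj that] .
  have gA: "?g ` h ` A = A" using gh by force
  have injI: "inj_on ((`) ((`) h)) (NC A)"
  proof (rule inj_onI)
    fix Q1 Q2 assume "Q1 \<in> NC A" "Q2 \<in> NC A" "(`) h ` Q1 = (`) h ` Q2"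
    moreover have "inj_on ((`) h) (Pow A)" using inj by (rule inj_on_image_Pow)
    moreover have "Q1 \<subseteq> Pow A" "Q2 \<subseteq> Pow A" using \<open>Q1 \<in> NC A\<close> \<open>Q2 \<in> NC A\<close>
      unfolding NC_def partition_on_def by auto
    ultimately show "Q1 = Q2" by (meson inj_on_image_eq_iff)
  qed
  have img: "(`) ((`) h) ` NC A = NC (h ` A)"
  proof
    show "(`) ((`) h) ` NC A \<subseteq> NC (h ` A)" using nc_image[OF sm] unfolding NC_def by auto
    show "NC (h ` A) \<subseteq> (`) ((`) h) ` NC A"
    proof
      fix Q assume Q: "Q \<in> NC (h ` A)"
      let ?Q' = "(`) ?g ` Q"
      have "?Q' \<in> NC A" using nc_image[OF smg] Q gA unfolding NC_def by auto
      moreover have "(`) ((`) h) ?Q' = Q"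
      proof -
        have "h ` ?g ` B = B" if "B \<in> Q" for B
        proof -
          have "B \<subseteq> h ` A" using Q that unfolding NC_def partition_on_def by auto
          then show ?thesis using gh by (force simp: image_iff)
        qed
        then show ?thesis by (force simp: image_iff image_image)
      qed
      ultimately show "Q \<in> (`) ((`) h) ` NC A" by blast
    qed
  qed
  have "CC k (h ` A) = (\<Sum>Q\<in>(`) ((`) h) ` NC A. \<Prod>\<pi>\<in>Q. k (card \<pi>))" unfolding CC_def img ..
  also have "\<dots> = (\<Sum>Q\<in>NC A. \<Prod>\<pi>\<in>(`) h ` Q. k (card \<pi>))" by (rule sum.reindex[OF injI, unfolded comp_def])
  also have "\<dots> = (\<Sum>Q\<in>NC A. \<Prod>\<pi>\<in>Q. k (card \<pi>))"
  proof (rule sum.cong[OF refl])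
    fix Q assume Q: "Q \<in> NC A"
    then have P: "partition_on A Q" unfolding NC_def by auto
    have ii: "inj_on ((`) h) Q" using inj P
      by (metis inj_on_image partition_onD1)
    show "(\<Prod>\<pi>\<in>(`) h ` Q. k (card \<pi>)) = (\<Prod>\<pi>\<in>Q. k (card \<pi>))"
      unfolding prod.reindex[OF ii] comp_def using card_image_block[OF inj P] by (intro prod.cong) auto
  qed
  finally show ?thesis unfolding CC_def .
qed

lemma CC_card: assumes "finite D" shows "CC k D = CC k {1..card D}"
  using CC_transport[OF rk_strict_mono[OF assms], of k] rk_image[OF assms] by simp



lemma ss_less_iff:
  assumes "sorted_wrt (<) (bs::nat list)" "i < length bs" "j < length bs"
  shows "bs!i < bs!j \<longleftrightarrow> i < j"
  using assms sorted_wrt_nth_less[OF assms(1)]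
  by (metis linorder_neqE_nat order_less_asym order_less_irrefl)

lemma ss_le:
  assumes "sorted_wrt (<) (bs::nat list)" "i \<le> j" "j < length bs"
  shows "bs!i \<le> bs!j"
  using assms sorted_wrt_nth_less[OF assms(1)] by (cases "i = j") (auto simp: less_imp_le)

lemma ss_between:
  assumes "sorted_wrt (<) (bs::nat list)" "Suc i < length bs" "t \<in> set bs"
  shows "\<not> (bs!i < t \<and> t < bs!(Suc i))"
proof
  assume a: "bs!i < t \<and> t < bs!(Suc i)"
  obtain j where j: "j < length bs" "t = bs!j" using assms(3) by (auto simp: in_set_conv_nth)
  have "i < j" using a j ss_less_iff[OF assms(1)] assms(2) by auto
  moreover have "j < Suc i" using a j ss_less_iff[OF assms(1)] assms(2) by auto
  ultimately show False by simp
qed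

lemma ss_find:
  "sorted (bs::nat list) \<Longrightarrow> bs \<noteq> [] \<Longrightarrow> hd bs \<le> x \<Longrightarrow> x < last bs \<Longrightarrow>
    \<exists>i. Suc i < length bs \<and> bs!i \<le> x \<and> x < bs!(Suc i)"
proof (induction bs)
  case Nil then show ?case by simp
next
  case (Cons a rest)
  show ?case
  proof (cases rest)
    case Nil then show ?thesis using Cons by simp
  next
    case (Cons b rest')
    show ?thesis
    proof (cases "x < b")
      case True then show ?thesis using Cons \<open>hd (a # rest) \<le> x\<close> by (intro exI[of _ 0]) auto
    next
      case False
      then have "\<exists>i. Suc i < length rest \<and> rest!i \<le> x \<and> x < rest!(Suc i)"
        using Cons.IH Cons.prems Cons by auto
      then obtain i where "Suc i < length rest \<and> rest!i \<le> x \<and> x < rest!(Suc i)" by blast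
      then show ?thesis by (intro exI[of _ "Suc i"]) auto
    qed
  qed
qed

definition gcomp :: "nat \<Rightarrow> nat set \<Rightarrow> nat \<Rightarrow> nat set" where
  "gcomp n X x = {y \<in> {1..n} - X. \<forall>s\<in>X. \<not> (x < s \<and> s < y) \<and> \<not> (y < s \<and> s < x)}"

definition Gs :: "nat \<Rightarrow> nat set \<Rightarrow> nat set set" where
  "Gs n X = gcomp n X ` ({1..n} - X)"

lemma gap_comp:
  assumes ss: "sorted_wrt (<) bs" and sb: "set bs = insert 0 (insert (Suc n) X)"
    and X: "X \<subseteq> {1..n}" and i: "Suc i < length bs" and x: "x \<in> {bs!i<..<bs!(Suc i)}"
  shows "x \<in> {1..n} - X \<and> {bs!i<..<bs!(Suc i)} = gcomp n X x"
proof -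
  have le: "t \<le> Suc n" if "t \<in> set bs" for t using that sb X by auto
  have inb: "bs!i \<in> set bs" "bs!(Suc i) \<in> set bs" using i by auto
  have mem: "y \<in> {1..n} - X" if "y \<in> {bs!i<..<bs!(Suc i)}" for y
  proof -
    have "y \<noteq> t" if "t \<in> set bs" for t using ss_between[OF ss i that] \<open>y \<in> _\<close> by auto
    then have "y \<notin> X" "y \<noteq> Suc n" using sb by auto
    moreover have "y \<le> Suc n" using le[OF inb(2)] \<open>y \<in> _\<close> by auto
    moreover have "y \<ge> 1" using \<open>y \<in> _\<close> by auto
    ultimately show ?thesis by auto
  qed
  have "{bs!i<..<bs!(Suc i)} = gcomp n X x"
  proof
    show "{bs!i<..<bs!(Suc i)} \<subseteq> gcomp n X x"
    proof
      fix y assume y: "y \<in> {bs!i<..<bs!(Suc i)}"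
      have "\<not> (x < s \<and> s < y) \<and> \<not> (y < s \<and> s < x)" if "s \<in> X" for s
      proof -
        have "s \<in> set bs" using that sb by auto
        then show ?thesis using ss_between[OF ss i] x y by fastforce
      qed
      then show "y \<in> gcomp n X x" using mem[OF y] unfolding gcomp_def by auto
    qed
    show "gcomp n X x \<subseteq> {bs!i<..<bs!(Suc i)}"
    proof
      fix y assume y: "y \<in> gcomp n X x"
      then have y1: "y \<in> {1..n} - X" and ns: "\<And>s. s \<in> X \<Longrightarrow> \<not> (x < s \<and> s < y) \<and> \<not> (y < s \<and> s < x)"
        unfolding gcomp_def by auto
      have xm: "x \<in> {1..n} - X" using mem[OF x] .
      have ny: "y \<noteq> t" if "t \<in> set bs" for t using that sb y1 by auto
      show "y \<in> {bs!i<..<bs!(Suc i)}"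
      proof (rule ccontr)
        assume "y \<notin> {bs!i<..<bs!(Suc i)}"
        then consider "y \<le> bs!i" | "y \<ge> bs!(Suc i)" by force
        then show False
        proof cases
          case 1
          then have "y < bs!i" using ny[OF inb(1)] by auto
          moreover have "bs!i < x" using x by auto
          moreover have "bs!i \<in> X" using inb(1) sb \<open>y < bs!i\<close> \<open>bs!i < x\<close> xm by auto
          ultimately show False using ns by blast
        next
          case 2
          then have "bs!(Suc i) < y" using ny[OF inb(2)] by auto
          moreover have "x < bs!(Suc i)" using x by auto
          moreover have "bs!(Suc i) \<in> X" using inb(2) sb \<open>bs!(Suc i) < y\<close> \<open>x < bs!(Suc i)\<close> y1 by auto
          ultimately show False using ns by blast
        qed
      qed
    qed
  qed
  then show ?thesis using mem[OF x] by simp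
qed

lemma gaps_unfold:
  "gaps n X = map (\<lambda>i. {(0 # sorted_list_of_set X @ [n + 1])!i <..< (0 # sorted_list_of_set X @ [n + 1])!(Suc i)})
      [0..<length (0 # sorted_list_of_set X @ [n + 1]) - 1]"
  unfolding gaps_def Let_def by simp

lemma gaps_main:
  assumes X: "X \<subseteq> {1..n}"
  shows "set (filter (\<lambda>D. D \<noteq> {}) (gaps n X)) = Gs n X
       \<and> distinct (filter (\<lambda>D. D \<noteq> {}) (gaps n X))"
proof -
  define bs where "bs = 0 # sorted_list_of_set X @ [n + 1]"
  have fin: "finite X" using X finite_subset by blast
  have sb: "set bs = insert 0 (insert (Suc n) X)" unfolding bs_def using fin by auto
  have ss: "sorted_wrt (<) bs"
    unfolding bs_def using fin X
    by (auto simp: sorted_wrt_append strict_sorted_list_of_set)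
  have lb: "length bs \<ge> 2" unfolding bs_def by simp
  define f where "f i = {bs!i <..< bs!(Suc i)}" for i
  have g: "gaps n X = map f [0..<length bs - 1]" unfolding gaps_unfold bs_def f_def by simp
  have filt: "filter (\<lambda>D. D \<noteq> {}) (gaps n X) = map f (filter (\<lambda>i. f i \<noteq> {}) [0..<length bs - 1])"
    unfolding g by (simp add: filter_map o_def)
  have "set (filter (\<lambda>D. D \<noteq> {}) (gaps n X)) = Gs n X"
  proof
    show "set (filter (\<lambda>D. D \<noteq> {}) (gaps n X)) \<subseteq> Gs n X"
    proof
      fix D assume "D \<in> set (filter (\<lambda>D. D \<noteq> {}) (gaps n X))"
      then obtain i where i: "i < length bs - 1" "D = f i" "f i \<noteq> {}" unfolding filt by auto
      then obtain x where x: "x \<in> f i" by auto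
      from gap_comp[OF ss sb X _ x[unfolded f_def]] i
      show "D \<in> Gs n X" unfolding Gs_def f_def by auto
    qed
    show "Gs n X \<subseteq> set (filter (\<lambda>D. D \<noteq> {}) (gaps n X))"
    proof
      fix D assume "D \<in> Gs n X"
      then obtain x where x: "x \<in> {1..n} - X" "D = gcomp n X x" unfolding Gs_def by auto
      have "hd bs \<le> x" "x < last bs" using x unfolding bs_def by auto
      then obtain i where i: "Suc i < length bs" "bs!i \<le> x" "x < bs!(Suc i)"
      proof -
        have "bs \<noteq> []" using lb by auto
        then show ?thesis using that ss_find[of bs x] strict_sorted_imp_sorted[OF ss] \<open>hd bs \<le> x\<close> \<open>x < last bs\<close> by blast
      qed
      have "bs!i \<noteq> x" using x(1) sb nth_mem[of i bs] i(1) by auto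
      then have xi: "x \<in> f i" using i unfolding f_def by auto
      then have "f i = D" using gap_comp[OF ss sb X i(1)] x unfolding f_def by auto
      then show "D \<in> set (filter (\<lambda>D. D \<noteq> {}) (gaps n X))" using xi i unfolding filt by force
    qed
  qed
  moreover have "distinct (filter (\<lambda>D. D \<noteq> {}) (gaps n X))"
    unfolding filt
  proof (rule distinct_map[THEN iffD2], rule conjI)
    show "distinct (filter (\<lambda>i. f i \<noteq> {}) [0..<length bs - 1])" by simp
    show "inj_on f (set (filter (\<lambda>i. f i \<noteq> {}) [0..<length bs - 1]))"
    proof (rule inj_onI)
      fix i j assume i: "i \<in> set (filter (\<lambda>i. f i \<noteq> {}) [0..<length bs - 1])"
        and j: "j \<in> set (filter (\<lambda>i. f i \<noteq> {}) [0..<length bs - 1])" and e: "f i = f j"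
      have *: False if h: "a < b" "a \<in> set (filter (\<lambda>i. f i \<noteq> {}) [0..<length bs - 1])"
        "b \<in> set (filter (\<lambda>i. f i \<noteq> {}) [0..<length bs - 1])" "f a = f b" for a b
      proof -
        obtain x where x: "x \<in> f a" using h(2) by auto
        have "x < bs!(Suc a)" using x unfolding f_def by auto
        moreover have "bs!(Suc a) \<le> bs!b" using ss_le[OF ss, of "Suc a" b] h by auto
        moreover have "bs!b < x" using x h(4) unfolding f_def by auto
        ultimately show False by simp
      qed
      show "i = j" using *[OF _ i j e] *[OF _ j i e[symmetric]] by (cases i j rule: linorder_cases) auto
    qed
  qed
  ultimately show ?thesis by simp
qed



lemma part_uniq: "partition_on A P \<Longrightarrow> B1 \<in> P \<Longrightarrow> B2 \<in> P \<Longrightarrow> x \<in> B1 \<Longrightarrow> x \<in> B2 \<Longrightarrow> B1 = B2"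
  unfolding partition_on_def pairwise_def disjnt_def by blast

lemma part_sub: "partition_on A P \<Longrightarrow> B \<in> P \<Longrightarrow> B \<subseteq> A"
  unfolding partition_on_def by blast

lemma part_ne: "partition_on A P \<Longrightarrow> B \<in> P \<Longrightarrow> B \<noteq> {}"
  unfolding partition_on_def by blast

lemma part_cover: "partition_on A P \<Longrightarrow> x \<in> A \<Longrightarrow> \<exists>B\<in>P. x \<in> B"
  unfolding partition_on_def by blast

lemma nc_subset: "noncrossing P \<Longrightarrow> Q \<subseteq> P \<Longrightarrow> noncrossing Q"
  by (rule noncrossingI) (meson noncrossingD subsetD)

lemma gc_trans:
  assumes "y \<notin> X" "\<forall>s\<in>X. \<not> (x < s \<and> s < y) \<and> \<not> (y < s \<and> s < x)"
    "\<forall>s\<in>X. \<not> (y < s \<and> s < z) \<and> \<not> (z < s \<and> s < y)"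
  shows "\<forall>s\<in>X. \<not> ((x::nat) < s \<and> s < z) \<and> \<not> (z < s \<and> s < x)"
proof
  fix s assume s: "s \<in> X"
  have a: "\<not> (x < s \<and> s < y) \<and> \<not> (y < s \<and> s < x)" using assms(2) s by blast
  have b: "\<not> (y < s \<and> s < z) \<and> \<not> (z < s \<and> s < y)" using assms(3) s by blast
  have "s \<noteq> y" using s assms(1) by blast
  then show "\<not> (x < s \<and> s < z) \<and> \<not> (z < s \<and> s < x)" using a b by linarith
qed

lemma gc_mem: "x \<in> {1..n} - X \<Longrightarrow> x \<in> gcomp n X x"
  unfolding gcomp_def by auto

lemma gc_sub: "gcomp n X x \<subseteq> {1..n} - X"
  unfolding gcomp_def by auto

lemma gc_eq:
  assumes x: "x \<in> {1..n} - X" and y: "y \<in> gcomp n X x"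
  shows "gcomp n X y = gcomp n X x"
proof
  have y1: "y \<in> {1..n} - X" and nxy: "\<forall>s\<in>X. \<not> (x < s \<and> s < y) \<and> \<not> (y < s \<and> s < x)"
    using y unfolding gcomp_def by auto
  have nyx: "\<forall>s\<in>X. \<not> (y < s \<and> s < x) \<and> \<not> (x < s \<and> s < y)" using nxy by blast
  show "gcomp n X y \<subseteq> gcomp n X x"
  proof
    fix z assume "z \<in> gcomp n X y"
    then have z1: "z \<in> {1..n} - X" and "\<forall>s\<in>X. \<not> (y < s \<and> s < z) \<and> \<not> (z < s \<and> s < y)"
      unfolding gcomp_def by auto
    then have "\<forall>s\<in>X. \<not> (x < s \<and> s < z) \<and> \<not> (z < s \<and> s < x)"
      using gc_trans[of y X x z] y1 nxy by blast
    then show "z \<in> gcomp n X x" using z1 unfolding gcomp_def by blast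
  qed
  show "gcomp n X x \<subseteq> gcomp n X y"
  proof
    fix z assume "z \<in> gcomp n X x"
    then have z1: "z \<in> {1..n} - X" and "\<forall>s\<in>X. \<not> (x < s \<and> s < z) \<and> \<not> (z < s \<and> s < x)"
      unfolding gcomp_def by auto
    then have "\<forall>s\<in>X. \<not> (y < s \<and> s < z) \<and> \<not> (z < s \<and> s < y)"
      using gc_trans[of x X y z] x nyx by blast
    then show "z \<in> gcomp n X y" using z1 unfolding gcomp_def by blast
  qed
qed

lemma Gs_rep: "G \<in> Gs n X \<Longrightarrow> x \<in> G \<Longrightarrow> G = gcomp n X x"
  unfolding Gs_def using gc_eq by auto

lemma Gs_disj: "G1 \<in> Gs n X \<Longrightarrow> G2 \<in> Gs n X \<Longrightarrow> z \<in> G1 \<Longrightarrow> z \<in> G2 \<Longrightarrow> G1 = G2"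
  using Gs_rep by metis

lemma Gs_sub: "G \<in> Gs n X \<Longrightarrow> G \<subseteq> {1..n} - X"
  unfolding Gs_def using gc_sub by auto

lemma Gs_cover: "\<Union>(Gs n X) = {1..n} - X"
proof
  show "\<Union>(Gs n X) \<subseteq> {1..n} - X" using Gs_sub by blast
  show "{1..n} - X \<subseteq> \<Union>(Gs n X)" unfolding Gs_def using gc_mem by blast
qed

lemma Gs_ne: "G \<in> Gs n X \<Longrightarrow> G \<noteq> {}"
  unfolding Gs_def using gc_mem by blast

lemma Gs_finite: "finite (Gs n X)" unfolding Gs_def by simp

lemma Gs_finite_el: "G \<in> Gs n X \<Longrightarrow> finite G"
  using Gs_sub finite_subset by (metis finite_Diff finite_atLeastAtMost)

lemma Gs_nosep: "G \<in> Gs n X \<Longrightarrow> a \<in> G \<Longrightarrow> b \<in> G \<Longrightarrow> s \<in> X \<Longrightarrow> \<not> (a < s \<and> s < b)"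
proof -
  assume h: "G \<in> Gs n X" "a \<in> G" "b \<in> G" "s \<in> X"
  then have "b \<in> gcomp n X a" using Gs_rep by blast
  then show ?thesis using h(4) unfolding gcomp_def by blast
qed

lemma Gs_convex:
  assumes G: "G \<in> Gs n X" and a: "a \<in> G" and b: "b \<in> G" and o: "a < c" "c < b" and c: "c \<in> {1..n} - X"
  shows "c \<in> G"
proof -
  have "\<forall>s\<in>X. \<not> (a < s \<and> s < c) \<and> \<not> (c < s \<and> s < a)"
    using Gs_nosep[OF G a b] o by fastforce
  then have "c \<in> gcomp n X a" using c unfolding gcomp_def by blast
  then show ?thesis using Gs_rep[OF G a] by simp
qed



context
  fixes n :: nat and S :: "nat set"
  assumes S: "S \<subseteq> {1..n}" and S1: "1 \<in> S"
begin

definition hh :: "(nat set \<Rightarrow> part) \<Rightarrow> part" where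
  "hh g = insert S (\<Union>G\<in>Gs n S. g G)"

lemma one_notin_G: "G \<in> Gs n S \<Longrightarrow> 1 \<notin> G"
  using Gs_sub S1 by blast

lemma blk_in: "g \<in> PiE (Gs n S) NC \<Longrightarrow> G \<in> Gs n S \<Longrightarrow> B \<in> g G \<Longrightarrow> B \<subseteq> G \<and> B \<noteq> {}"
  unfolding NC_def using part_sub part_ne by (metis (no_types, lifting) PiE_mem mem_Collect_eq)

lemma gG_part: "g \<in> PiE (Gs n S) NC \<Longrightarrow> G \<in> Gs n S \<Longrightarrow> partition_on G (g G) \<and> noncrossing (g G)"
  unfolding NC_def by (metis (no_types, lifting) PiE_mem mem_Collect_eq)

lemma S_notin_U: "g \<in> PiE (Gs n S) NC \<Longrightarrow> S \<notin> (\<Union>G\<in>Gs n S. g G)"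
  using blk_in one_notin_G S1 by blast

lemma hh_NC:
  assumes g: "g \<in> PiE (Gs n S) NC"
  shows "hh g \<in> NC {1..n}"
proof -
  have U: "\<Union>(hh g) = {1..n}"
  proof -
    have e: "\<Union>(g G) = G" if "G \<in> Gs n S" for G using gG_part[OF g that] partition_onD1 by metis
    have "\<Union>(\<Union>G\<in>Gs n S. g G) = (\<Union>G\<in>Gs n S. \<Union>(g G))" by blast
    also have "\<dots> = (\<Union>G\<in>Gs n S. G)" using e by simp
    finally have "\<Union>(\<Union>G\<in>Gs n S. g G) = \<Union>(Gs n S)" by simp
    then show ?thesis unfolding hh_def using Gs_cover[of n S] S by auto
  qed
  have part: "partition_on {1..n} (hh g)"
  proof (rule partition_onI)
    show "\<Union>(hh g) = {1..n}" by (rule U)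
    show "{} \<notin> hh g" unfolding hh_def using S1 blk_in[OF g] by blast
    fix p q assume p: "p \<in> hh g" and q: "q \<in> hh g" and pq: "p \<noteq> q"
    show "disjnt p q"
    proof (cases "p = S")
      case True
      then obtain G where "G \<in> Gs n S" "q \<in> g G" using q pq unfolding hh_def by auto
      then show ?thesis using True blk_in[OF g] Gs_sub by (force simp: disjnt_def)
    next
      case False
      then obtain G1 where G1: "G1 \<in> Gs n S" "p \<in> g G1" using p unfolding hh_def by auto
      show ?thesis
      proof (cases "q = S")
        case True
        then show ?thesis using G1 blk_in[OF g] Gs_sub by (force simp: disjnt_def)
      next
        case False
        then obtain G2 where G2: "G2 \<in> Gs n S" "q \<in> g G2" using q unfolding hh_def by auto
        show ?thesis
        proof (cases "G1 = G2")
          case True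
          then show ?thesis using gG_part[OF g G1(1)] G1 G2 pq part_uniq by (metis disjnt_iff)
        next
          case False
          then show ?thesis using Gs_disj[OF G1(1) G2(1)] blk_in[OF g G1(1) G1(2)] blk_in[OF g G2(1) G2(2)]
            by (auto simp: disjnt_def)
        qed
      qed
    qed
  qed
  have nc: "noncrossing (hh g)"
  proof (rule noncrossingI)
    fix B1 B2 a b c d
    assume B: "B1 \<in> hh g" "B2 \<in> hh g" and o: "a < c" "c < b" "b < (d::nat)"
      and m: "a \<in> B1" "b \<in> B1" "c \<in> B2" "d \<in> B2"
    show "B1 = B2"
    proof (cases "B1 = S")
      case T1: True
      show ?thesis
      proof (cases "B2 = S")
        case True then show ?thesis using T1 by simp
      next
        case False
        then obtain G where G: "G \<in> Gs n S" "B2 \<in> g G" using B(2) unfolding hh_def by auto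
        have "c \<in> G" "d \<in> G" using blk_in[OF g G] m by auto
        then have False using Gs_nosep[OF G(1), of c d b] m(2) T1 o by blast
        then show ?thesis ..
      qed
    next
      case F1: False
      then obtain G1 where G1: "G1 \<in> Gs n S" "B1 \<in> g G1" using B(1) unfolding hh_def by auto
      have ab: "a \<in> G1" "b \<in> G1" using blk_in[OF g G1] m by auto
      show ?thesis
      proof (cases "B2 = S")
        case True
        then have False using Gs_nosep[OF G1(1) ab, of c] m(3) o by blast
        then show ?thesis ..
      next
        case False
        then obtain G2 where G2: "G2 \<in> Gs n S" "B2 \<in> g G2" using B(2) unfolding hh_def by auto
        have cG2: "c \<in> G2" using blk_in[OF g G2] m by auto
        then have "c \<in> {1..n} - S" using Gs_sub[OF G2(1)] by blast
        then have "c \<in> G1" using Gs_convex[OF G1(1) ab o(1)] o(2) by blast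
        then have "G1 = G2" using Gs_disj[OF G1(1) G2(1)] cG2 by blast
        then show ?thesis using noncrossingD[of "g G1" B1 B2 a c b d] gG_part[OF g G1(1)] G1 G2 o m by blast
      qed
    qed
  qed
  show ?thesis using part nc unfolding NC_def by blast
qed

lemma hh_restr:
  assumes g: "g \<in> PiE (Gs n S) NC" and G: "G \<in> Gs n S"
  shows "g G = {B \<in> hh g. B \<subseteq> G}"
proof
  show "g G \<subseteq> {B \<in> hh g. B \<subseteq> G}" using blk_in[OF g G] G unfolding hh_def by blast
  show "{B \<in> hh g. B \<subseteq> G} \<subseteq> g G"
  proof
    fix B assume B: "B \<in> {B \<in> hh g. B \<subseteq> G}"
    have "B \<noteq> S" using B S1 one_notin_G[OF G] by blast
    then obtain G' where G': "G' \<in> Gs n S" "B \<in> g G'" using B unfolding hh_def by auto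
    obtain x where "x \<in> B" using blk_in[OF g G'] by blast
    then have "G' = G" using Gs_disj[OF G' (1) G] blk_in[OF g G'] B by blast
    then show "B \<in> g G" using G' by simp
  qed
qed

lemma hh_inj: "inj_on hh (PiE (Gs n S) NC)"
proof (rule inj_onI)
  fix g1 g2 assume g1: "g1 \<in> PiE (Gs n S) NC" and g2: "g2 \<in> PiE (Gs n S) NC" and e: "hh g1 = hh g2"
  show "g1 = g2"
    by (rule PiE_ext[OF g1 g2]) (use hh_restr[OF g1] hh_restr[OF g2] e in auto)
qed

lemma block_in_comp:
  assumes Q: "Q \<in> NC {1..n}" and SQ: "S \<in> Q" and B: "B \<in> Q" "B \<noteq> S" and x: "x \<in> B"
  shows "B \<subseteq> gcomp n S x"
proof
  have pQ: "partition_on {1..n} Q" and ncQ: "noncrossing Q" using Q unfolding NC_def by auto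
  have BS: "B \<inter> S = {}" using part_uniq[OF pQ B(1) SQ] B(2) by blast
  have Bn: "B \<subseteq> {1..n}" using part_sub[OF pQ B(1)] .
  fix y assume y: "y \<in> B"
  have "\<not> (x < s \<and> s < y) \<and> \<not> (y < s \<and> s < x)" if s: "s \<in> S" for s
  proof -
    have "x \<ge> 1" using x Bn by auto
    moreover have "x \<noteq> 1" using x BS S1 by blast
    ultimately have x1: "1 < x" by linarith
    have "y \<ge> 1" using y Bn by auto
    moreover have "y \<noteq> 1" using y BS S1 by blast
    ultimately have y1: "1 < y" by linarith
    show ?thesis
    proof (intro conjI notI)
      assume "x < s \<and> s < y"
      then have "S = B" using noncrossingD[OF ncQ SQ B(1), of 1 x s y] x1 S1 s x y by blast
      then show False using B(2) by simp
    next
      assume "y < s \<and> s < x"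
      then have "S = B" using noncrossingD[OF ncQ SQ B(1), of 1 y s x] y1 S1 s x y by blast
      then show False using B(2) by simp
    qed
  qed
  then show "y \<in> gcomp n S x" using y Bn BS unfolding gcomp_def by blast
qed

lemma hh_surj: "hh ` PiE (Gs n S) NC = {Q \<in> NC {1..n}. S \<in> Q}"
proof
  show "hh ` PiE (Gs n S) NC \<subseteq> {Q \<in> NC {1..n}. S \<in> Q}"
    using hh_NC unfolding hh_def by blast
  show "{Q \<in> NC {1..n}. S \<in> Q} \<subseteq> hh ` PiE (Gs n S) NC"
  proof
    fix Q assume "Q \<in> {Q \<in> NC {1..n}. S \<in> Q}"
    then have Q: "Q \<in> NC {1..n}" and SQ: "S \<in> Q" by auto
    have pQ: "partition_on {1..n} Q" and ncQ: "noncrossing Q" using Q unfolding NC_def by auto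
    have inG: "B \<subseteq> gcomp n S x" if "B \<in> Q" "B \<noteq> S" "x \<in> B" for B x
      using block_in_comp[OF Q SQ that] .
    have xnS: "x \<in> {1..n} - S" if "B \<in> Q" "B \<noteq> S" "x \<in> B" for B x
      using that part_uniq[OF pQ _ SQ] part_sub[OF pQ] by blast
    define g where "g = (\<lambda>G\<in>Gs n S. {B \<in> Q. B \<subseteq> G})"
    have gmem: "g \<in> PiE (Gs n S) NC"
    proof (rule PiE_I)
      show "x \<notin> Gs n S \<Longrightarrow> g x = undefined" for x unfolding g_def by simp
      fix G assume G: "G \<in> Gs n S"
      have "partition_on G {B \<in> Q. B \<subseteq> G}"
      proof (rule partition_onI)
        show "\<Union>{B \<in> Q. B \<subseteq> G} = G"
        proof
          show "\<Union>{B \<in> Q. B \<subseteq> G} \<subseteq> G" by blast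
          show "G \<subseteq> \<Union>{B \<in> Q. B \<subseteq> G}"
          proof
            fix x assume x: "x \<in> G"
            then have xn: "x \<in> {1..n} - S" using Gs_sub[OF G] by blast
            then obtain B where B: "B \<in> Q" "x \<in> B" using part_cover[OF pQ] by blast
            have "B \<noteq> S" using B xn by blast
            then have "B \<subseteq> G" using inG[OF B(1) _ B(2)] Gs_rep[OF G x] by simp
            then show "x \<in> \<Union>{B \<in> Q. B \<subseteq> G}" using B by blast
          qed
        qed
        show "p \<in> {B \<in> Q. B \<subseteq> G} \<Longrightarrow> q \<in> {B \<in> Q. B \<subseteq> G} \<Longrightarrow> p \<noteq> q \<Longrightarrow> disjnt p q" for p q
          using part_uniq[OF pQ] by (auto simp: disjnt_def)
        show "{} \<notin> {B \<in> Q. B \<subseteq> G}" using part_ne[OF pQ] by blast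
      qed
      moreover have "noncrossing {B \<in> Q. B \<subseteq> G}" by (rule nc_subset[OF ncQ]) blast
      ultimately show "g G \<in> NC G" unfolding g_def NC_def using G by simp
    qed
    have "hh g = Q"
    proof
      show "hh g \<subseteq> Q" unfolding hh_def g_def using SQ by auto
      show "Q \<subseteq> hh g"
      proof
        fix B assume B: "B \<in> Q"
        show "B \<in> hh g"
        proof (cases "B = S")
          case True then show ?thesis unfolding hh_def by simp
        next
          case False
          obtain x where x: "x \<in> B" using part_ne[OF pQ B] by blast
          have G: "gcomp n S x \<in> Gs n S" using xnS[OF B False x] unfolding Gs_def by blast
          have "B \<subseteq> gcomp n S x" using inG[OF B False x] .
          then have "B \<in> g (gcomp n S x)" unfolding g_def using G B by simp
          then show ?thesis unfolding hh_def using G by blast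
        qed
      qed
    qed
    then show "Q \<in> hh ` PiE (Gs n S) NC" using gmem by blast
  qed
qed

lemma fixed_S_sum:
  "(\<Sum>Q\<in>{Q \<in> NC {1..n}. S \<in> Q}. \<Prod>\<pi>\<in>Q. k (card \<pi>)) = k (card S) * (\<Prod>G\<in>Gs n S. CC k G)"
proof -
  have fin: "\<And>G. G \<in> Gs n S \<Longrightarrow> finite (NC G)" using finite_NC Gs_finite_el by blast
  have "k (card S) * (\<Prod>G\<in>Gs n S. CC k G)
      = k (card S) * (\<Sum>g\<in>PiE (Gs n S) NC. \<Prod>G\<in>Gs n S. \<Prod>\<pi>\<in>g G. k (card \<pi>))"
    unfolding CC_def by (simp add: prod_sum_PiE[OF Gs_finite fin])
  also have "\<dots> = (\<Sum>g\<in>PiE (Gs n S) NC. \<Prod>\<pi>\<in>hh g. k (card \<pi>))"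
    unfolding sum_distrib_left
  proof (rule sum.cong[OF refl])
    fix g assume g: "g \<in> PiE (Gs n S) NC"
    have fU: "finite (\<Union>G\<in>Gs n S. g G)"
    proof -
      have "finite (g G)" if "G \<in> Gs n S" for G
        using gG_part[OF g that] Gs_finite_el[OF that] finite_elements by blast
      then show ?thesis using Gs_finite by blast
    qed
    have "(\<Prod>\<pi>\<in>hh g. k (card \<pi>)) = k (card S) * (\<Prod>\<pi>\<in>(\<Union>G\<in>Gs n S. g G). k (card \<pi>))"
      unfolding hh_def using S_notin_U[OF g] fU by simp
    also have "(\<Prod>\<pi>\<in>(\<Union>G\<in>Gs n S. g G). k (card \<pi>)) = (\<Prod>G\<in>Gs n S. \<Prod>\<pi>\<in>g G. k (card \<pi>))"
    proof (rule prod.UNION_disjoint)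
      show "finite (Gs n S)" by (rule Gs_finite)
      show "\<forall>G\<in>Gs n S. finite (g G)"
        using gG_part[OF g] Gs_finite_el finite_elements by blast
      show "\<forall>G1\<in>Gs n S. \<forall>G2\<in>Gs n S. G1 \<noteq> G2 \<longrightarrow> g G1 \<inter> g G2 = {}"
      proof (intro ballI impI)
        fix G1 G2 assume G: "G1 \<in> Gs n S" "G2 \<in> Gs n S" "G1 \<noteq> G2"
        show "g G1 \<inter> g G2 = {}"
        proof (rule ccontr)
          assume "g G1 \<inter> g G2 \<noteq> {}"
          then obtain B where "B \<in> g G1" "B \<in> g G2" by blast
          then have "B \<subseteq> G1" "B \<subseteq> G2" "B \<noteq> {}" using blk_in[OF g] G by blast+
          then show False using Gs_disj[OF G(1,2)] G(3) by blast
        qed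
      qed
    qed
    finally show "k (card S) * (\<Prod>G\<in>Gs n S. \<Prod>\<pi>\<in>g G. k (card \<pi>)) = (\<Prod>\<pi>\<in>hh g. k (card \<pi>))" by simp
  qed
  also have "\<dots> = (\<Sum>Q\<in>hh ` PiE (Gs n S) NC. \<Prod>\<pi>\<in>Q. k (card \<pi>))"
    by (rule sum.reindex[OF hh_inj, symmetric, unfolded o_def])
  finally show ?thesis unfolding hh_surj by simp
qed

end

lemma CC_decomp:
  assumes n: "n \<ge> 1"
  shows "CC k {1..n} = (\<Sum>S\<in>{S. S \<subseteq> {1..n} \<and> 1 \<in> S}. k (card S) * (\<Prod>G\<in>Gs n S. CC k G))"
proof -
  let ?I = "{S. S \<subseteq> {1..n} \<and> 1 \<in> S}"
  let ?A = "\<lambda>S. {Q \<in> NC {1..n}. S \<in> Q}"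
  have un: "NC {1..n} = (\<Union>S\<in>?I. ?A S)"
  proof
    show "NC {1..n} \<subseteq> (\<Union>S\<in>?I. ?A S)"
    proof
      fix Q assume Q: "Q \<in> NC {1..n}"
      then have pQ: "partition_on {1..n} Q" unfolding NC_def by auto
      obtain B where "B \<in> Q" "1 \<in> B" using part_cover[OF pQ] n by force
      moreover have "B \<subseteq> {1..n}" using part_sub[OF pQ \<open>B \<in> Q\<close>] .
      ultimately show "Q \<in> (\<Union>S\<in>?I. ?A S)" using Q by blast
    qed
    show "(\<Union>S\<in>?I. ?A S) \<subseteq> NC {1..n}" by blast
  qed
  let ?f = "\<lambda>Q. \<Prod>\<pi>\<in>Q. k (card \<pi>)"
  have "CC k {1..n} = sum ?f (NC {1..n})" unfolding CC_def ..
  also have "\<dots> = sum ?f (\<Union>S\<in>?I. ?A S)" using un by (rule arg_cong[of _ _ "sum ?f"])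
  also have "\<dots> = (\<Sum>S\<in>?I. \<Sum>Q\<in>?A S. \<Prod>\<pi>\<in>Q. k (card \<pi>))"
  proof (rule sum.UNION_disjoint)
    show "finite ?I" by (rule finite_subset[of _ "Pow {1..n}"]) auto
    show "\<forall>S\<in>?I. finite (?A S)" using finite_NC[of "{1..n}"] by auto
    show "\<forall>S1\<in>?I. \<forall>S2\<in>?I. S1 \<noteq> S2 \<longrightarrow> ?A S1 \<inter> ?A S2 = {}"
    proof (intro ballI impI)
      fix S1 S2 assume S: "S1 \<in> ?I" "S2 \<in> ?I" "S1 \<noteq> S2"
      show "?A S1 \<inter> ?A S2 = {}"
      proof (rule ccontr)
        assume "?A S1 \<inter> ?A S2 \<noteq> {}"
        then obtain Q where "Q \<in> NC {1..n}" "S1 \<in> Q" "S2 \<in> Q" by blast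
        then show False using part_uniq[of "{1..n}" Q S1 S2 1] S unfolding NC_def by blast
      qed
    qed
  qed
  also have "\<dots> = (\<Sum>S\<in>?I. k (card S) * (\<Prod>G\<in>Gs n S. CC k G))"
    by (rule sum.cong[OF refl]) (use fixed_S_sum in auto)
  finally show ?thesis .
qed



lemma ncp_part: "ncp n P \<Longrightarrow> partition_on {1..n} P"
  unfolding ncp_def by simp

lemma ncp_nc: "ncp n P \<Longrightarrow> noncrossing P"
  unfolding ncp_def by simp

lemma ncp_block_finite: assumes "ncp n P" "B \<in> P" shows "finite B"
proof -
  have "B \<subseteq> {1..n}" by (rule part_sub[OF ncp_part[OF assms(1)] assms(2)])
  then show ?thesis by (rule finite_subset) simp
qed

lemma restr_part:
  assumes "partition_on A P" shows "partition_on (G \<inter> A) (restr P G)"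
proof -
  have "restr P G = (\<inter>) G ` P - {{}}" unfolding restr_def by blast
  then show ?thesis using partition_on_restrict[OF assms, of G] by simp
qed

lemma restr_nc:
  assumes "noncrossing P" shows "noncrossing (restr P G)"
proof (rule noncrossingI)
  fix B1 B2 a b c d
  assume B: "B1 \<in> restr P G" "B2 \<in> restr P G" and o: "a < c" "c < b" "b < (d::nat)"
    and m: "a \<in> B1" "b \<in> B1" "c \<in> B2" "d \<in> B2"
  obtain C1 where C1: "C1 \<in> P" "B1 = C1 \<inter> G" using B(1) unfolding restr_def by blast
  obtain C2 where C2: "C2 \<in> P" "B2 = C2 \<inter> G" using B(2) unfolding restr_def by blast
  have "C1 = C2" using noncrossingD[OF assms C1(1) C2(1) o] m C1 C2 by blast
  then show "B1 = B2" using C1 C2 by simp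
qed

lemma restr_mem: "B \<in> P \<Longrightarrow> B \<subseteq> G \<Longrightarrow> B \<noteq> {} \<Longrightarrow> B \<in> restr P G"
  unfolding restr_def by blast

lemma piece_ncp:
  assumes P: "ncp n P" and G: "G \<subseteq> {1..n}" "G \<noteq> {}"
  shows "ncp (card G) (stdz (restr P G)) \<and> card G \<ge> 1 \<and> card (\<Union>(stdz (restr P G))) = card G"
proof -
  have fG: "finite G" using G finite_subset by blast
  have pr: "partition_on G (restr P G)" using restr_part[OF ncp_part[OF P], of G] G by (simp add: Int_absorb2)
  have nc: "noncrossing (restr P G)" using restr_nc[OF ncp_nc[OF P]] .
  have U: "\<Union>(restr P G) = G" using pr partition_onD1 by metis
  have "ncp (card G) (stdz (restr P G))" using stdz_ncp[OF fG pr nc] .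
  moreover have "card G \<ge> 1" using fG G by (simp add: Suc_leI card_gt_0_iff)
  moreover have "card (\<Union>(stdz (restr P G))) = card G" using stdz_Union[of "restr P G"] U fG by simp
  ultimately show ?thesis by simp
qed

lemma ubar_eq:
  assumes "ncp n P"
  shows "ubar P L = map (\<lambda>D. stdz (restr P D)) (filter (\<lambda>D. D \<noteq> {}) (gaps n (\<Union>L)))"
  unfolding ubar_def using ncp_card_Union[OF assms] by simp

lemma set_ubar:
  assumes "ncp n P" "\<Union>L \<subseteq> {1..n}"
  shows "set (ubar P L) = (\<lambda>G. stdz (restr P G)) ` Gs n (\<Union>L)"
  unfolding ubar_eq[OF assms(1)] using gaps_main[OF assms(2)] by simp

lemma prod_ubar:
  assumes "ncp n P" "\<Union>L \<subseteq> {1..n}"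
  shows "prod_list (map F (ubar P L)) = (\<Prod>G\<in>Gs n (\<Union>L). F (stdz (restr P G)))"
proof -
  have "prod_list (map F (ubar P L)) = prod_list (map (\<lambda>G. F (stdz (restr P G))) (filter (\<lambda>D. D \<noteq> {}) (gaps n (\<Union>L))))"
    unfolding ubar_eq[OF assms(1)] by (simp add: o_def)
  also have "\<dots> = (\<Prod>G\<in>set (filter (\<lambda>D. D \<noteq> {}) (gaps n (\<Union>L))). F (stdz (restr P G)))"
    using gaps_main[OF assms(2)] by (intro prod.distinct_set_conv_list[symmetric]) blast
  also have "\<dots> = (\<Prod>G\<in>Gs n (\<Union>L). F (stdz (restr P G)))" using gaps_main[OF assms(2)] by (intro prod.cong) auto
  finally show ?thesis .
qed

lemma lowerset_sub: "lowerset P L \<Longrightarrow> L \<subseteq> P"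
  unfolding lowerset_def by simp

lemma lower_Union_sub: "ncp n P \<Longrightarrow> lowerset P L \<Longrightarrow> \<Union>L \<subseteq> {1..n}"
  using lowerset_sub ncp_Union by blast

lemma lower_sep:
  assumes low: "lowerset P L" and B: "B \<in> P" "B \<notin> L" "finite B" and b: "b1 \<in> B" "b2 \<in> B"
    and s: "s \<in> \<Union>L" "b1 < s" "s < b2"
  shows False
proof -
  obtain C where C: "C \<in> L" "s \<in> C" using s(1) by blast
  have CP: "C \<in> P" using C(1) lowerset_sub[OF low] by blast
  have "Min B \<le> b1" "b2 \<le> Max B" using B(3) b by auto
  then have "s \<in> conv B" unfolding conv_def using s by auto
  then have "(B, C) \<in> {(\<pi>, \<rho>). \<pi> \<in> P \<and> \<rho> \<in> P \<and> conv \<pi> \<inter> \<rho> \<noteq> {}}" using B(1) CP C(2) by blast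
  then have "(B, C) \<in> arrow P" unfolding arrow_def by (rule r_into_trancl)
  then have "B \<in> L" using low C(1) unfolding lowerset_def by blast
  then show False using B(2) by simp
qed

lemma block_in_gap:
  assumes P: "ncp n P" and low: "lowerset P L" and B: "B \<in> P" "B \<notin> L" and y: "y \<in> B"
  shows "gcomp n (\<Union>L) y \<in> Gs n (\<Union>L) \<and> B \<subseteq> gcomp n (\<Union>L) y"
proof -
  have pP: "partition_on {1..n} P" using ncp_part[OF P] .
  have disj: "B \<inter> \<Union>L = {}"
  proof (rule ccontr)
    assume "B \<inter> \<Union>L \<noteq> {}"
    then obtain z C where "z \<in> B" "C \<in> L" "z \<in> C" by blast
    then have "B = C" using part_uniq[OF pP B(1)] lowerset_sub[OF low] by blast
    then show False using B(2) \<open>C \<in> L\<close> by simp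
  qed
  have Bn: "B \<subseteq> {1..n}" using part_sub[OF pP B(1)] .
  have fB: "finite B" using ncp_block_finite[OF P B(1)] .
  have yn: "y \<in> {1..n} - \<Union>L" using y Bn disj by blast
  have "B \<subseteq> gcomp n (\<Union>L) y"
  proof
    fix z assume z: "z \<in> B"
    have "\<not> (y < s \<and> s < z) \<and> \<not> (z < s \<and> s < y)" if "s \<in> \<Union>L" for s
      using lower_sep[OF low B fB y z that] lower_sep[OF low B fB z y that] by blast
    then show "z \<in> gcomp n (\<Union>L) y" using z Bn disj unfolding gcomp_def by blast
  qed
  moreover have "gcomp n (\<Union>L) y \<in> Gs n (\<Union>L)" using yn unfolding Gs_def by blast
  ultimately show ?thesis by simp
qed

lemma trancl_last:
  assumes "(a, b) \<in> R\<^sup>+" "\<And>c. (c, b) \<in> R \<Longrightarrow> c = b"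
  shows "a = b"
  using assms
proof (induction rule: trancl.induct)
  case (r_into_trancl a b) then show ?case by blast
next
  case (trancl_into_trancl a b c)
  then show ?case by blast
qed

lemma first_block_lower:
  assumes P: "ncp n P" and p1: "\<pi>1 \<in> P" "1 \<in> \<pi>1"
  shows "lowerset P {\<pi>1}"
proof -
  have pP: "partition_on {1..n} P" using ncp_part[OF P] .
  have base: "\<tau> = \<pi>1" if "(\<tau>, \<pi>1) \<in> {(\<pi>, \<rho>). \<pi> \<in> P \<and> \<rho> \<in> P \<and> conv \<pi> \<inter> \<rho> \<noteq> {}}" for \<tau>
  proof (rule ccontr)
    assume ne: "\<tau> \<noteq> \<pi>1"
    have tP: "\<tau> \<in> P" and ex: "conv \<tau> \<inter> \<pi>1 \<noteq> {}" using that by auto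
    obtain x where x: "x \<in> conv \<tau>" "x \<in> \<pi>1" using ex by blast
    have ft: "finite \<tau>" using ncp_block_finite[OF P tP] .
    have tne: "\<tau> \<noteq> {}" using part_ne[OF pP tP] .
    have mm: "Min \<tau> \<in> \<tau>" "Max \<tau> \<in> \<tau>" using ft tne by auto
    have xt: "x \<notin> \<tau>" using part_uniq[OF pP tP p1(1)] x(2) ne by blast
    have "Min \<tau> \<le> x" "x \<le> Max \<tau>" using x(1) unfolding conv_def by auto
    then have o2: "Min \<tau> < x" "x < Max \<tau>" using mm xt by (metis order_le_less)+
    have "Min \<tau> \<ge> 1" using mm part_sub[OF pP tP] by auto
    moreover have "Min \<tau> \<noteq> 1"
    proof
      assume "Min \<tau> = 1"
      then have "1 \<in> \<tau>" using mm by simp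
      then have "\<tau> = \<pi>1" by (rule part_uniq[OF pP tP p1(1) _ p1(2)])
      then show False using ne by simp
    qed
    ultimately have o1: "1 < Min \<tau>" by linarith
    have "\<pi>1 = \<tau>" using noncrossingD[OF ncp_nc[OF P] p1(1) tP o1 o2 p1(2) x(2) mm] .
    then show False using ne by simp
  qed
  show ?thesis unfolding lowerset_def
  proof (intro conjI ballI allI impI)
    show "{\<pi>1} \<subseteq> P" using p1 by simp
    fix \<pi> \<sigma> assume "\<pi> \<in> {\<pi>1}" "(\<sigma>, \<pi>) \<in> arrow P"
    then have "(\<sigma>, \<pi>1) \<in> arrow P" by simp
    then have "\<sigma> = \<pi>1" unfolding arrow_def by (rule trancl_last) (rule base)
    then show "\<sigma> \<in> {\<pi>1}" by simp
  qed
qed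

lemma J_lower: "L \<subseteq> Jpart n \<Longrightarrow> lowerset (Jpart n) L"
proof -
  assume L: "L \<subseteq> Jpart n"
  have base: "a = b" if "(a, b) \<in> {(\<pi>, \<rho>). \<pi> \<in> Jpart n \<and> \<rho> \<in> Jpart n \<and> conv \<pi> \<inter> \<rho> \<noteq> {}}" for a b
    using that unfolding Jpart_def conv_def by auto
  have "a = b" if "(a, b) \<in> arrow (Jpart n)" for a b
    using that unfolding arrow_def
  proof (induction rule: trancl.induct)
    case (r_into_trancl a b) then show ?case by (rule base)
  next
    case (trancl_into_trancl a b c) then show ?case using base[of b c] by simp
  qed
  then show ?thesis unfolding lowerset_def using L by blast
qed

lemma lower_empty: "lowerset P {}"
  unfolding lowerset_def by simp



lemma valid_Cons: "valid_mp (P # rest) \<longleftrightarrow> (\<exists>n\<ge>1. ncp n P) \<and> valid_mp rest"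
  unfolding valid_mp_def by simp

lemma valid_finite: "valid_mp xs \<Longrightarrow> P \<in> set xs \<Longrightarrow> finite P \<and> (\<forall>B\<in>P. finite B)"
proof -
  assume v: "valid_mp xs" "P \<in> set xs"
  then obtain n where "ncp n P" unfolding valid_mp_def by blast
  then show ?thesis using finite_elements[OF _ ncp_part] ncp_block_finite by blast
qed

lemma finite_cuts1:
  assumes v: "valid_mp xs"
  shows "finite (cuts1 xs)"
proof -
  let ?A = "Pow (\<Union>(set xs))"
  have fA: "finite ?A" using valid_finite[OF v] by auto
  have "cuts1 xs \<subseteq> {ls. set ls \<subseteq> ?A \<and> length ls = length xs}"
  proof
    fix ls assume ls: "ls \<in> cuts1 xs"
    then have len: "length ls = length xs" and low: "\<forall>i<length xs. lowerset (xs ! i) (ls ! i)"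
      unfolding cuts1_def by auto
    have "set ls \<subseteq> ?A"
    proof
      fix L assume "L \<in> set ls"
      then obtain i where i: "i < length ls" "L = ls ! i" by (auto simp: in_set_conv_nth)
      then have "L \<subseteq> xs ! i" using low len lowerset_sub by auto
      moreover have "xs ! i \<in> set xs" using i len by simp
      ultimately show "L \<in> ?A" by blast
    qed
    then show "ls \<in> {ls. set ls \<subseteq> ?A \<and> length ls = length xs}" using len by simp
  qed
  then show ?thesis using finite_lists_length_eq[OF fA] finite_subset by blast
qed

lemma cuts1_single:
  assumes ls: "ls \<in> cuts1 (P # rest)" and f1: "length (filter (\<lambda>L. L \<noteq> {}) ls) = 1"
  shows "ls = hd ls # replicate (length rest) {} \<and> lowerset P (hd ls) \<and> 1 \<in> \<Union>(hd ls)"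
proof -
  have len: "length ls = Suc (length rest)" and low: "\<forall>i<length (P # rest). lowerset ((P # rest) ! i) (ls ! i)"
    and one: "1 \<in> \<Union>(hd ls)" using ls unfolding cuts1_def by auto
  obtain L ls' where lsc: "ls = L # ls'" using len by (cases ls) auto
  have "L \<noteq> {}" using one lsc by auto
  then have "filter (\<lambda>L. L \<noteq> {}) ls' = []" using f1 lsc by simp
  then have "\<forall>y\<in>set ls'. y = {}" by (simp add: filter_empty_conv)
  then have "ls' = replicate (length rest) {}" using replicate_length_same[of ls' "{}"] len lsc by simp
  moreover have "lowerset P L" using low lsc by (metis nth_Cons_0 zero_less_Suc length_Cons)
  ultimately show ?thesis using lsc one by simp
qed

lemma cuts1_mem:
  assumes "lowerset P L" "1 \<in> \<Union>L"
  shows "L # replicate (length rest) {} \<in> cuts1 (P # rest)"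
  unfolding cuts1_def
proof (intro CollectI conjI allI impI)
  show "length (L # replicate (length rest) {}) = length (P # rest)" by simp
  show "1 \<in> \<Union>(hd (L # replicate (length rest) {}))" using assms(2) by simp
  fix i assume "i < length (P # rest)"
  then show "lowerset ((P # rest) ! i) ((L # replicate (length rest) {}) ! i)"
    using assms(1) lower_empty by (cases i) auto
qed

lemma sum_cuts1:
  assumes v: "valid_mp (P # rest)"
    and w0: "\<And>ls. ls \<in> cuts1 (P # rest) \<Longrightarrow> length (filter (\<lambda>L. L \<noteq> {}) ls) \<noteq> 1 \<Longrightarrow> w ls = 0"
  shows "(\<Sum>ls\<in>cuts1 (P # rest). w ls) = (\<Sum>L\<in>{L. lowerset P L \<and> 1 \<in> \<Union>L}. w (L # replicate (length rest) {}))"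
proof -
  let ?A = "{L. lowerset P L \<and> 1 \<in> \<Union>L}"
  let ?c = "\<lambda>L. L # replicate (length rest) {}"
  have sub: "?c ` ?A \<subseteq> cuts1 (P # rest)" using cuts1_mem by blast
  have "(\<Sum>ls\<in>cuts1 (P # rest). w ls) = (\<Sum>ls\<in>?c ` ?A. w ls)"
  proof (rule sum.mono_neutral_right[OF finite_cuts1[OF v] sub])
    show "\<forall>ls\<in>cuts1 (P # rest) - ?c ` ?A. w ls = 0"
    proof
      fix ls assume ls: "ls \<in> cuts1 (P # rest) - ?c ` ?A"
      show "w ls = 0"
      proof (cases "length (filter (\<lambda>L. L \<noteq> {}) ls) = 1")
        case True
        then have "ls = ?c (hd ls) \<and> hd ls \<in> ?A" using cuts1_single[of ls P rest] ls by auto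
        then have "ls \<in> ?c ` ?A" by blast
        then show ?thesis using ls by blast
      next
        case False then show ?thesis using w0 ls by blast
      qed
    qed
  qed
  also have "\<dots> = (\<Sum>L\<in>?A. w (?c L))"
  proof -
    have "inj_on ?c ?A" by (auto simp: inj_on_def)
    then show ?thesis by (simp add: sum.reindex o_def)
  qed
  finally show ?thesis .
qed

lemma lword_single: "L \<noteq> {} \<Longrightarrow> lword (L # replicate m {}) = [stdz L]"
  unfolding lword_def by simp

lemma kappa_len: "kappa k (lword ls) \<noteq> 0 \<Longrightarrow> length (filter (\<lambda>L. L \<noteq> {}) ls) = 1"
  unfolding kappa_def lword_def by (auto split: list.splits)

lemma e_inf_len: "e_inf (lword ls) \<noteq> 0 \<Longrightarrow> length (filter (\<lambda>L. L \<noteq> {}) ls) = 1"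
  unfolding e_inf_def lword_def by (auto split: list.splits)

lemma gaps_empty: "gaps m {} = [{0<..<Suc m}]"
  unfolding gaps_def by simp

lemma ubar_empty:
  assumes "ncp m Q" "m \<ge> 1"
  shows "ubar Q {} = [Q]"
proof -
  have "restr Q {0<..<Suc m} = Q"
  proof -
    have "B \<inter> {0<..<Suc m} = B \<and> B \<noteq> {}" if "B \<in> Q" for B
      using part_sub[OF ncp_part[OF assms(1)] that] part_ne[OF ncp_part[OF assms(1)] that] by auto
    then show ?thesis unfolding restr_def by force
  qed
  moreover have "1 \<in> {0<..<Suc m}" using assms(2) by simp
  then have "{0<..<Suc m} \<noteq> {}" by blast
  ultimately show ?thesis using ubar_eq[OF assms(1), of "{}"] gaps_empty[of m] stdz_id[OF assms(1)]
    by simp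
qed

lemma concat_rest:
  "valid_mp rest \<Longrightarrow> concat (map (\<lambda>(P, L). ubar P L) (zip rest (replicate (length rest) {}))) = rest"
proof (induction rest)
  case Nil then show ?case by simp
next
  case (Cons Q rest)
  then obtain m where "m \<ge> 1" "ncp m Q" using valid_Cons by blast
  then show ?case using Cons ubar_empty valid_Cons by simp
qed

lemma uword_single:
  assumes "valid_mp (P # rest)"
  shows "uword (P # rest) (L # replicate (length rest) {}) = ubar P L @ rest"
  using concat_rest[of rest] assms valid_Cons unfolding uword_def by simp

definition mu :: "mpart \<Rightarrow> nat multiset" where
  "mu xs = mset (map (\<lambda>P. card (\<Union>P)) xs)"

lemma piece_lt:
  assumes P: "ncp m P" and low: "lowerset P L" and one: "1 \<in> \<Union>L" and G: "G \<in> Gs m (\<Union>L)"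
  shows "card (\<Union>(stdz (restr P G))) < m \<and> ncp (card G) (stdz (restr P G)) \<and> card G \<ge> 1"
proof -
  have X: "\<Union>L \<subseteq> {1..m}" using lower_Union_sub[OF P low] .
  have Gs': "G \<subseteq> {1..m} - \<Union>L" using Gs_sub[OF G] .
  have Gne: "G \<noteq> {}" using Gs_ne[OF G] .
  have pc: "ncp (card G) (stdz (restr P G)) \<and> card G \<ge> 1 \<and> card (\<Union>(stdz (restr P G))) = card G"
    using piece_ncp[OF P _ Gne] Gs' by blast
  have "G \<subset> {1..m}" using Gs' one X by blast
  then have "card G < card {1..m}" by (rule psubset_card_mono[rotated]) simp
  then show ?thesis using pc by simp
qed

lemma mu_less:
  assumes P: "ncp m P" and low: "lowerset P L" and one: "1 \<in> \<Union>L"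
  shows "(mu (ubar P L @ rest), mu (P # rest)) \<in> mult less_than"
proof -
  have X: "\<Union>L \<subseteq> {1..m}" using lower_Union_sub[OF P low] .
  have "(mu rest + mset (map (\<lambda>P. card (\<Union>P)) (ubar P L)), mu rest + {#m#}) \<in> mult less_than"
  proof (rule one_step_implies_mult)
    show "{#m#} \<noteq> {#}" by simp
    show "\<forall>k\<in>#mset (map (\<lambda>P. card (\<Union>P)) (ubar P L)). \<exists>j\<in>#{#m#}. (k, j) \<in> less_than"
      using piece_lt[OF P low one] set_ubar[OF P X] by auto
  qed
  moreover have "mu (P # rest) = mu rest + {#m#}" unfolding mu_def using ncp_card_Union[OF P] by simp
  moreover have "mu (ubar P L @ rest) = mu rest + mset (map (\<lambda>P. card (\<Union>P)) (ubar P L))"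
    unfolding mu_def by simp
  ultimately show ?thesis by simp
qed

lemma valid_uword:
  assumes P: "ncp m P" and low: "lowerset P L" and one: "1 \<in> \<Union>L" and v: "valid_mp rest"
  shows "valid_mp (ubar P L @ rest)"
proof -
  have X: "\<Union>L \<subseteq> {1..m}" using lower_Union_sub[OF P low] .
  have "\<forall>Q\<in>set (ubar P L). \<exists>n\<ge>1. ncp n Q"
  proof
    fix Q assume "Q \<in> set (ubar P L)"
    then obtain G where G: "G \<in> Gs m (\<Union>L)" "Q = stdz (restr P G)" using set_ubar[OF P X] by auto
    have "ncp (card G) Q \<and> card G \<ge> 1" using piece_lt[OF P low one G(1)] G(2) by simp
    then show "\<exists>n\<ge>1. ncp n Q" by blast
  qed
  then show ?thesis using v unfolding valid_mp_def by auto
qed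

definition FF :: "(nat \<Rightarrow> 'a::comm_ring_1) \<Rightarrow> part \<Rightarrow> 'a" where
  "FF k P = (if P = Jpart (card (\<Union>P)) then CC k {1..card (\<Union>P)} else 0)"

lemma Jpart_Union: "\<Union>(Jpart m) = {1..m}"
  unfolding Jpart_def by auto

lemma J_block_card: "B \<in> Jpart m \<Longrightarrow> card B = 1"
  unfolding Jpart_def by auto

lemma nonJ_block:
  assumes P: "ncp m P" and ne: "P \<noteq> Jpart m"
  shows "\<exists>B\<in>P. card B \<noteq> 1"
proof (rule ccontr)
  assume "\<not> (\<exists>B\<in>P. card B \<noteq> 1)"
  then have c1: "\<forall>B\<in>P. card B = 1" by blast
  have pP: "partition_on {1..m} P" using ncp_part[OF P] .
  have "P = Jpart m"
  proof
    show "P \<subseteq> Jpart m"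
    proof
      fix B assume B: "B \<in> P"
      then obtain x where "B = {x}" using c1 card_1_singletonE by blast
      moreover have "x \<in> {1..m}" using part_sub[OF pP B] \<open>B = {x}\<close> by auto
      ultimately show "B \<in> Jpart m" unfolding Jpart_def by blast
    qed
    show "Jpart m \<subseteq> P"
    proof
      fix B assume "B \<in> Jpart m"
      then obtain i where i: "i \<in> {1..m}" "B = {i}" unfolding Jpart_def by blast
      obtain C where C: "C \<in> P" "i \<in> C" using part_cover[OF pP i(1)] by blast
      obtain x where "C = {x}" using c1 C(1) card_1_singletonE by blast
      then show "B \<in> P" using C i by simp
    qed
  qed
  then show False using ne by simp
qed

lemma stdz_block:
  assumes "finite (\<Union>Q)" "B \<in> Q"
  shows "rk (\<Union>Q) ` B \<in> stdz Q \<and> card (rk (\<Union>Q) ` B) = card B"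
proof -
  have "inj_on (rk (\<Union>Q)) B" using rk_inj[OF assms(1)] assms(2) by (meson Union_upper inj_on_subset)
  then show ?thesis unfolding stdz_rk using assms(2) by (simp add: card_image)
qed

lemma stdz_nonJ:
  assumes "finite (\<Union>Q)" "B \<in> Q" "card B \<noteq> 1"
  shows "stdz Q \<noteq> Jpart j"
  using stdz_block[OF assms(1,2)] assms(3) J_block_card by metis

lemma stdz_card: assumes "finite (\<Union>Q)" shows "card (stdz Q) = card Q"
proof -
  have "inj_on ((`) (rk (\<Union>Q))) Q" using rk_inj[OF assms] by (rule inj_on_image)
  then show ?thesis unfolding stdz_rk by (simp add: card_image)
qed

lemma stdz_singletons:
  assumes "finite S" shows "stdz ((\<lambda>i. {i}) ` S) = Jpart (card S)"
proof -
  have U: "\<Union>((\<lambda>i. {i}) ` S) = S" by auto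
  have "stdz ((\<lambda>i. {i}) ` S) = (\<lambda>i. {rk S i}) ` S" unfolding stdz_rk U by (auto simp: image_image)
  also have "\<dots> = (\<lambda>j. {j}) ` (rk S ` S)" by (simp add: image_image)
  also have "\<dots> = Jpart (card S)" unfolding rk_image[OF assms] Jpart_def ..
  finally show ?thesis .
qed

lemma restr_J: "G \<subseteq> {1..m} \<Longrightarrow> restr (Jpart m) G = (\<lambda>i. {i}) ` G"
  unfolding restr_def Jpart_def by auto



lemma wf_mu: "wf (inv_image (mult less_than) mu)"
  by (rule wf_inv_image) (rule wf_mult[OF wf_less_than])

lemma first_block:
  assumes "ncp m P" "m \<ge> 1"
  obtains \<pi>1 where "\<pi>1 \<in> P" "1 \<in> \<pi>1"
  using part_cover[OF ncp_part[OF assms(1)], of 1] assms(2) by auto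

lemma finite_A:
  assumes "ncp m P" shows "finite {L. lowerset P L \<and> 1 \<in> \<Union>L}"
proof -
  have "finite P" using finite_elements[OF _ ncp_part[OF assms]] by simp
  then have "finite (Pow P)" by simp
  then show ?thesis by (rule finite_subset[rotated]) (auto dest: lowerset_sub)
qed

lemma psi_one:
  fixes \<psi> :: "mpart \<Rightarrow> 'a::comm_ring_1"
  assumes h\<psi>: "\<forall>xs. valid_mp xs \<longrightarrow> \<psi> xs = eps xs + prec e_inf \<psi> xs"
  shows "valid_mp xs \<Longrightarrow> \<psi> xs = 1"
  using wf_mu
proof (induction xs rule: wf_induct_rule)
  case (less xs)
  show ?case
  proof (cases xs)
    case Nil
    then show ?thesis using h\<psi> less.prems by (simp add: eps_def prec_def)
  next
    case (Cons P rest)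
    have v: "valid_mp (P # rest)" using less.prems Cons by simp
    obtain m where m: "m \<ge> 1" "ncp m P" using v valid_Cons by blast
    have vr: "valid_mp rest" using v valid_Cons by blast
    have pP: "partition_on {1..m} P" using ncp_part[OF m(2)] .
    obtain \<pi>1 where p1: "\<pi>1 \<in> P" "1 \<in> \<pi>1" using first_block[OF m(2,1)] by blast
    let ?A = "{L. lowerset P L \<and> 1 \<in> \<Union>L}"
    let ?c = "\<lambda>L. L # replicate (length rest) {}"
    have "\<psi> xs = (\<Sum>ls\<in>cuts1 (P # rest). e_inf (lword ls) * \<psi> (uword (P # rest) ls))"
      using h\<psi> v Cons by (simp add: eps_def prec_def)
    also have "\<dots> = (\<Sum>L\<in>?A. e_inf (lword (?c L)) * \<psi> (uword (P # rest) (?c L)))"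
      by (rule sum_cuts1[OF v]) (metis e_inf_len mult_zero_left)
    also have "\<dots> = (\<Sum>L\<in>?A. if L = {\<pi>1} then \<psi> (ubar P {\<pi>1} @ rest) else 0)"
    proof (rule sum.cong[OF refl])
      fix L assume L: "L \<in> ?A"
      have Lne: "L \<noteq> {}" using L by auto
      have X: "\<Union>L \<subseteq> {1..m}" using lower_Union_sub[OF m(2)] L by blast
      have fX: "finite (\<Union>L)" using X finite_subset by blast
      have cs: "card (stdz L) = card L" using stdz_card[OF fX] .
      have iff: "card L = 1 \<longleftrightarrow> L = {\<pi>1}"
      proof
        assume "card L = 1"
        then obtain B where B: "L = {B}" by (rule card_1_singletonE)
        then have "B \<in> P" "1 \<in> B" using L lowerset_sub by auto
        then have "B = \<pi>1" using part_uniq[OF pP _ p1(1)] p1(2) by blast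
        then show "L = {\<pi>1}" using B by simp
      qed simp
      show "e_inf (lword (?c L)) * \<psi> (uword (P # rest) (?c L)) = (if L = {\<pi>1} then \<psi> (ubar P {\<pi>1} @ rest) else 0)"
        using lword_single[OF Lne] uword_single[OF v] cs iff by (simp add: e_inf_def)
    qed
    also have "\<dots> = \<psi> (ubar P {\<pi>1} @ rest)"
    proof -
      have "{\<pi>1} \<in> ?A" using first_block_lower[OF m(2) p1] p1 by simp
      then show ?thesis using finite_A[OF m(2)] by simp
    qed
    also have "\<dots> = 1"
    proof (rule less.IH)
      have low: "lowerset P {\<pi>1}" using first_block_lower[OF m(2) p1] .
      have one: "1 \<in> \<Union>{\<pi>1}" using p1 by simp
      show "(ubar P {\<pi>1} @ rest, xs) \<in> inv_image (mult less_than) mu"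
        using mu_less[OF m(2) low one] Cons by simp
      show "valid_mp (ubar P {\<pi>1} @ rest)" using valid_uword[OF m(2) low one vr] .
    qed
    finally show ?thesis .
  qed
qed

lemma kappa_J: "kappa k [Jpart c] = k c"
  unfolding kappa_def using Jpart_Union[of c] by simp

lemma FF_J: "FF k (Jpart c) = CC k {1..c}"
  unfolding FF_def using Jpart_Union[of c] by simp

lemma kappa_nonJ: "finite (\<Union>Q) \<Longrightarrow> B \<in> Q \<Longrightarrow> card B \<noteq> 1 \<Longrightarrow> kappa k [stdz Q] = 0"
  unfolding kappa_def using stdz_nonJ by auto

lemma FF_nonJ: "finite (\<Union>Q) \<Longrightarrow> B \<in> Q \<Longrightarrow> card B \<noteq> 1 \<Longrightarrow> FF k (stdz Q) = 0"
  unfolding FF_def using stdz_nonJ by auto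

lemma phi_prod:
  fixes \<phi> :: "mpart \<Rightarrow> 'a::comm_ring_1"
  assumes h\<phi>: "\<forall>xs. valid_mp xs \<longrightarrow> \<phi> xs = eps xs + prec (kappa k) \<phi> xs"
  shows "valid_mp xs \<Longrightarrow> \<phi> xs = prod_list (map (FF k) xs)"
  using wf_mu
proof (induction xs rule: wf_induct_rule)
  case (less xs)
  show ?case
  proof (cases xs)
    case Nil
    then show ?thesis using h\<phi> less.prems by (simp add: eps_def prec_def)
  next
    case (Cons P rest)
    have v: "valid_mp (P # rest)" using less.prems Cons by simp
    obtain m where m: "m \<ge> 1" "ncp m P" using v valid_Cons by blast
    have vr: "valid_mp rest" using v valid_Cons by blast
    have pP: "partition_on {1..m} P" using ncp_part[OF m(2)] .
    let ?A = "{L. lowerset P L \<and> 1 \<in> \<Union>L}"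
    let ?c = "\<lambda>L. L # replicate (length rest) {}"
    let ?R = "prod_list (map (FF k) rest)"
    let ?T = "\<lambda>L. kappa k [stdz L] * ((\<Prod>G\<in>Gs m (\<Union>L). FF k (stdz (restr P G))) * ?R)"
    have "\<phi> xs = (\<Sum>ls\<in>cuts1 (P # rest). kappa k (lword ls) * \<phi> (uword (P # rest) ls))"
      using h\<phi> v Cons by (simp add: eps_def prec_def)
    also have "\<dots> = (\<Sum>L\<in>?A. kappa k (lword (?c L)) * \<phi> (uword (P # rest) (?c L)))"
      by (rule sum_cuts1[OF v]) (metis kappa_len mult_zero_left)
    also have "\<dots> = (\<Sum>L\<in>?A. ?T L)"
    proof (rule sum.cong[OF refl])
      fix L assume L: "L \<in> ?A"
      have Lne: "L \<noteq> {}" using L by auto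
      have low: "lowerset P L" and one: "1 \<in> \<Union>L" using L by auto
      have X: "\<Union>L \<subseteq> {1..m}" using lower_Union_sub[OF m(2) low] .
      have "\<phi> (ubar P L @ rest) = prod_list (map (FF k) (ubar P L @ rest))"
      proof (rule less.IH)
        show "(ubar P L @ rest, xs) \<in> inv_image (mult less_than) mu"
          using mu_less[OF m(2) low one] Cons by simp
        show "valid_mp (ubar P L @ rest)" using valid_uword[OF m(2) low one vr] .
      qed
      also have "\<dots> = (\<Prod>G\<in>Gs m (\<Union>L). FF k (stdz (restr P G))) * ?R"
        using prod_ubar[OF m(2) X, of "FF k"] by simp
      finally show "kappa k (lword (?c L)) * \<phi> (uword (P # rest) (?c L)) = ?T L"
        using lword_single[OF Lne] uword_single[OF v] by simp
    qed
    also have "\<dots> = FF k P * ?R"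
    proof (cases "P = Jpart m")
      case True
      let ?I = "{S. S \<subseteq> {1..m} \<and> 1 \<in> S}"
      let ?s = "\<lambda>S. (\<lambda>i. {i}) ` (S::nat set)"
      have injs: "inj_on ?s ?I" by (rule inj_onI) (auto simp: set_eq_iff)
      have imA: "?s ` ?I = ?A"
      proof
        show "?s ` ?I \<subseteq> ?A"
        proof
          fix L assume "L \<in> ?s ` ?I"
          then obtain S where S: "S \<in> ?I" "L = ?s S" by blast
          have "L \<subseteq> Jpart m" using S unfolding Jpart_def by auto
          then show "L \<in> ?A" using J_lower[of L m] True S by auto
        qed
        show "?A \<subseteq> ?s ` ?I"
        proof
          fix L assume L: "L \<in> ?A"
          then have LJ: "L \<subseteq> Jpart m" using lowerset_sub True by blast
          then have "L = ?s (\<Union>L)" unfolding Jpart_def by blast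
          moreover have "\<Union>L \<in> ?I" using LJ L Jpart_Union[of m] by auto
          ultimately show "L \<in> ?s ` ?I" by blast
        qed
      qed
      have "(\<Sum>L\<in>?A. ?T L) = (\<Sum>S\<in>?I. ?T (?s S))"
        unfolding imA[symmetric] by (rule sum.reindex[OF injs, unfolded o_def])
      also have "\<dots> = (\<Sum>S\<in>?I. k (card S) * (\<Prod>G\<in>Gs m S. CC k G) * ?R)"
      proof (rule sum.cong[OF refl])
        fix S assume S: "S \<in> ?I"
        have fS: "finite S" using S finite_subset by blast
        have U: "\<Union>(?s S) = S" by auto
        have "kappa k [stdz (?s S)] = k (card S)" using stdz_singletons[OF fS] kappa_J by simp
        moreover have "FF k (stdz (restr P G)) = CC k G" if G: "G \<in> Gs m S" for G
        proof -
          have Gm: "G \<subseteq> {1..m}" using Gs_sub[OF G] by blast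
          have fG: "finite G" using Gm finite_subset by blast
          have "stdz (restr P G) = Jpart (card G)" using restr_J[OF Gm] True stdz_singletons[OF fG] by simp
          then show ?thesis using CC_card[OF fG, of k] by (simp add: FF_def Jpart_Union)
        qed
        ultimately show "?T (?s S) = k (card S) * (\<Prod>G\<in>Gs m S. CC k G) * ?R"
          unfolding U by (simp add: mult.assoc)
      qed
      also have "\<dots> = CC k {1..m} * ?R"
        unfolding CC_decomp[OF m(1)] by (simp add: sum_distrib_right)
      also have "\<dots> = FF k P * ?R" using True by (simp add: FF_def Jpart_Union)
      finally show ?thesis .
    next
      case False
      have FP: "FF k P = 0" unfolding FF_def using ncp_card_Union[OF m(2)] False by simp
      have "?T L = 0" if L: "L \<in> ?A" for L
      proof (cases "kappa k [stdz L] = 0")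
        case True then show ?thesis by simp
      next
        case kn: False
        have low: "lowerset P L" and one: "1 \<in> \<Union>L" using L by auto
        have X: "\<Union>L \<subseteq> {1..m}" using lower_Union_sub[OF m(2) low] .
        have fX: "finite (\<Union>L)" using X finite_subset by blast
        have c1: "\<forall>C\<in>L. card C = 1" using kappa_nonJ[OF fX] kn by metis
        obtain B where B: "B \<in> P" "card B \<noteq> 1" using nonJ_block[OF m(2) False] by blast
        have BL: "B \<notin> L" using B c1 by blast
        obtain y where y: "y \<in> B" using part_ne[OF pP B(1)] by blast
        have G: "gcomp m (\<Union>L) y \<in> Gs m (\<Union>L)" and BG: "B \<subseteq> gcomp m (\<Union>L) y"
          using block_in_gap[OF m(2) low B(1) BL y] by auto
        let ?G = "gcomp m (\<Union>L) y"
        have Bin: "B \<in> restr P ?G" using restr_mem[OF B(1) BG] y by blast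
        have "\<Union>(restr P ?G) \<subseteq> {1..m}" using Gs_sub[OF G] unfolding restr_def by blast
        then have "finite (\<Union>(restr P ?G))" using finite_subset by blast
        then have "FF k (stdz (restr P ?G)) = 0" using FF_nonJ Bin B(2) by blast
        then have "(\<Prod>G\<in>Gs m (\<Union>L). FF k (stdz (restr P G))) = 0"
          using G Gs_finite by (intro prod_zero) auto
        then show ?thesis by simp
      qed
      then show ?thesis using FP by simp
    qed
    finally show ?thesis using Cons by simp
  qed
qed



lemma Kchar_quot: "Kchar f (quot P Q) = (\<Prod>\<tau>\<in>Q. f [stdz (restr P \<tau>)])"
  unfolding Kchar_def quot_def prod_unfold_prod_mset by (simp add: multiset.map_comp o_def)

lemma card_Jpart: "card (Jpart n) = n"
  unfolding Jpart_def by (subst card_image) (auto simp: inj_on_def)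

lemma card_nonJ:
  assumes P: "ncp n P" and ne: "P \<noteq> Jpart n"
  shows "card P < n"
proof -
  have pP: "partition_on {1..n} P" using ncp_part[OF P] .
  have fP: "finite P" using finite_elements[OF _ pP] by simp
  obtain B where B: "B \<in> P" "card B \<noteq> 1" using nonJ_block[OF P ne] by blast
  have ge1: "\<forall>C\<in>P. 1 \<le> card C"
  proof
    fix C assume C: "C \<in> P"
    have "finite C" "C \<noteq> {}" using ncp_block_finite[OF P C] part_ne[OF pP C] by auto
    then show "1 \<le> card C" by (simp add: Suc_leI card_gt_0_iff)
  qed
  have "1 < card B" using ge1 B by force
  then have "(\<Sum>C\<in>P. (1::nat)) < (\<Sum>C\<in>P. card C)"
    using sum_strict_mono_ex1[OF fP, of "\<lambda>_. 1" card] ge1 B(1) by blast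
  moreover have "(\<Sum>C\<in>P. card C) = card (\<Union>P)"
    using card_Union_disjoint[of P] partition_onD2[OF pP] ncp_block_finite[OF P] by simp
  ultimately show ?thesis using ncp_card_Union[OF P] by simp
qed

theorem mainTheorem14:
  fixes k :: "nat \<Rightarrow> 'a::field" and n :: nat and P :: part
    and \<phi> \<psi> :: "mpart \<Rightarrow> 'a"
  assumes "n \<ge> 1" and "ncp n P"
    and "\<forall>xs. valid_mp xs \<longrightarrow> \<phi> xs = eps xs + prec (kappa k) \<phi> xs"
    and "\<forall>xs. valid_mp xs \<longrightarrow> \<psi> xs = eps xs + prec e_inf \<psi> xs"
  shows "\<phi> [P] = act \<psi> (Kchar (kappa k)) n P
       \<and> act \<psi> (Kchar (kappa k)) n P
           = (\<Sum>Q\<in>{Q. ncp n Q \<and> refines P Q}. Kchar (kappa k) (quot P Q))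
       \<and> (card P < n \<longrightarrow> (\<Sum>Q\<in>{Q. ncp n Q \<and> refines P Q}. Kchar (kappa k) (quot P Q)) = 0)
       \<and> (card P = n \<longrightarrow> (\<Sum>Q\<in>{Q. ncp n Q \<and> refines P Q}. Kchar (kappa k) (quot P Q))
                          = (\<Sum>Q\<in>{Q. ncp n Q}. \<Prod>\<pi>\<in>Q. k (card \<pi>)))"
proof -
  note n = assms(1) and P = assms(2)
  let ?\<Sigma> = "(\<Sum>Q\<in>{Q. ncp n Q \<and> refines P Q}. Kchar (kappa k) (quot P Q))"
  have vP: "valid_mp [P]" unfolding valid_mp_def using n P by auto
  have phiP: "\<phi> [P] = FF k P" using phi_prod[OF assms(3) vP] by simp
  have act: "act \<psi> (Kchar (kappa k)) n P = ?\<Sigma>"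
    unfolding act_def
  proof (rule sum.cong[OF refl])
    fix Q assume "Q \<in> {Q. ncp n Q \<and> refines P Q}"
    then have "valid_mp [Q]" unfolding valid_mp_def using n by auto
    then show "\<psi> [Q] * Kchar (kappa k) (quot P Q) = Kchar (kappa k) (quot P Q)"
      using psi_one[OF assms(4)] by simp
  qed
  have Jcase: "?\<Sigma> = (\<Sum>Q\<in>{Q. ncp n Q}. \<Prod>\<pi>\<in>Q. k (card \<pi>))" if J: "P = Jpart n"
  proof -
    have "{Q. ncp n Q \<and> refines P Q} = {Q. ncp n Q}"
    proof -
      have "refines P Q" if "ncp n Q" for Q
        unfolding refines_def J Jpart_def using part_cover[OF ncp_part[OF that]] by blast
      then show ?thesis by blast
    qed
    moreover have "Kchar (kappa k) (quot P Q) = (\<Prod>\<pi>\<in>Q. k (card \<pi>))" if Q: "ncp n Q" for Q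
      unfolding Kchar_quot
    proof (rule prod.cong[OF refl])
      fix \<tau> assume \<tau>: "\<tau> \<in> Q"
      have \<tau>n: "\<tau> \<subseteq> {1..n}" using part_sub[OF ncp_part[OF Q] \<tau>] .
      have f\<tau>: "finite \<tau>" using \<tau>n finite_subset by blast
      have "stdz (restr P \<tau>) = Jpart (card \<tau>)" using restr_J[OF \<tau>n] J stdz_singletons[OF f\<tau>] by simp
      then show "kappa k [stdz (restr P \<tau>)] = k (card \<tau>)" using kappa_J by simp
    qed
    ultimately show ?thesis by simp
  qed
  have nonJcase: "?\<Sigma> = 0" if nJ: "P \<noteq> Jpart n"
  proof -
    obtain B where B: "B \<in> P" "card B \<noteq> 1" using nonJ_block[OF P nJ] by blast
    have Bne: "B \<noteq> {}" using part_ne[OF ncp_part[OF P] B(1)] .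
    have "Kchar (kappa k) (quot P Q) = 0" if Q: "ncp n Q" "refines P Q" for Q
      unfolding Kchar_quot
    proof (rule prod_zero)
      show "finite Q" using finite_elements[OF _ ncp_part[OF Q(1)]] by simp
      obtain \<tau> where \<tau>: "\<tau> \<in> Q" "B \<subseteq> \<tau>" using Q(2) B(1) unfolding refines_def by blast
      have \<tau>n: "\<tau> \<subseteq> {1..n}" using part_sub[OF ncp_part[OF Q(1)] \<tau>(1)] .
      have Bin: "B \<in> restr P \<tau>" using restr_mem[OF B(1) \<tau>(2) Bne] .
      have "\<Union>(restr P \<tau>) \<subseteq> {1..n}" using \<tau>n unfolding restr_def by blast
      then have "finite (\<Union>(restr P \<tau>))" using finite_subset by blast
      then have "kappa k [stdz (restr P \<tau>)] = 0" using kappa_nonJ Bin B(2) by blast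
      then show "\<exists>\<tau>\<in>Q. kappa k [stdz (restr P \<tau>)] = 0" using \<tau>(1) by blast
    qed
    then show ?thesis by simp
  qed
  have FFv: "FF k P = ?\<Sigma>"
  proof (cases "P = Jpart n")
    case True
    have "FF k P = CC k {1..n}" using True by (simp add: FF_def Jpart_Union)
    also have "\<dots> = (\<Sum>Q\<in>{Q. ncp n Q}. \<Prod>\<pi>\<in>Q. k (card \<pi>))"
      unfolding CC_def by (simp add: ncp_NC)
    finally show ?thesis using Jcase[OF True] by simp
  next
    case False
    then show ?thesis using nonJcase[OF False] ncp_card_Union[OF P] by (simp add: FF_def)
  qed
  have c1: "card P < n \<longrightarrow> ?\<Sigma> = 0"
  proof
    assume "card P < n"
    then have "P \<noteq> Jpart n" using card_Jpart[of n] by auto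
    then show "?\<Sigma> = 0" by (rule nonJcase)
  qed
  have c2: "card P = n \<longrightarrow> ?\<Sigma> = (\<Sum>Q\<in>{Q. ncp n Q}. \<Prod>\<pi>\<in>Q. k (card \<pi>))"
    using Jcase card_nonJ[OF P] by fastforce
  show ?thesis using phiP act FFv c1 c2 by simp
qed

end
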